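(* Let $X$ and $Y$ be completely regular Hausdorff spaces, $\mu\in\mathcal{P}_\sigma(X)$, $\nu\in\mathcal{P}_\sigma(Y)$ Baire probability measures, and $c\in lsc_{bi}(X\times Y)$ with $v_{\min}(\mathbf{OP})<+\infty$. Then the following are equivalent: (i) $(\mathbf{DP})$ has a solution; (ii) there exist $\phi^*\in C_b(X)$, $\psi^*\in C_b(Y)$, $\gamma^*\in\Gamma(\mu,\nu)$ with $\phi^*\oplus\psi^*\le c$ and $\int_{X\times Y}c\,d\gamma^*=\int_X\phi^*\,d\mu+\int_Y\psi^*\,d\nu$; (iii) $(\mathbf{DP})$ and $(\mathbf{OP})$ both have solutions and $v_{\max}(\mathbf{DP})=v_{\min}(\mathbf{OP})$. Moreover, if (ii) holds then $(\phi^*,\psi^* )$ is a solution of $(\mathbf{DP})$ and $\gamma^*$ is a solution of $(\mathbf{OP})$.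
   Context: $C_b(Z)$: real-valued bounded continuous functions on $Z$. $\mathcal{M}^1(Z)$: finitely additive $\gamma:\mathcal{U}(Z)\to[0,\infty)$ on the algebra $\mathcal{U}(Z)$ generated by zero-sets, with $\gamma(Z)=1$, regular (for every $A\in\mathcal{U}(Z)$, $\varepsilon>0$ there is a zero-set $F\subseteq A$ with $\gamma(A\setminus F)<\varepsilon$). $lsc_{bi}(Z)$: proper bounded-below lower semicontinuous $g:Z\to\mathbb{R}\cup\{+\infty\}$, with $\int g\,d\gamma:=\sup\{\int f d\gamma: f\in C_b(Z), f\le g\}$. $\mathcal{P}_\sigma(X)$: Baire probability measures. $(\phi\oplus\psi)(x,y):=\phi(x)+\psi(y)$. $\Gamma(\mu,\nu):=\{\gamma\in\mathcal{M}^1(X\times Y):\int\phi\oplus\psi\,d\gamma=\int\phi\,d\mu+\int\psi\,d\nu\ \forall\phi\in C_b(X),\psi\in C_b(Y)\}$. $(\mathbf{OP})$: $v_{\min}(\mathbf{OP}):=\inf\{\int_{X\times Y}c\,d\gamma:\gamma\in\Gamma(\mu,\nu)\}$; a solution is a minimizer in $\Gamma(\mu,\nu)$. $(\mathbf{DP})$: $v_{\max}(\mathbf{DP}):=\sup\{\int_X\phi\,d\mu+\int_Y\psi\,d\nu:\phi\in C_b(X),\psi\in C_b(Y),\phi\oplus\psi\le c\}$; a solution is an admissible pair attaining the supremum. *)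

theory Defs
  imports "HOL-Analysis.Analysis" "HOL-Probability.Probability"
begin

definition Cb :: "('a::topological_space \<Rightarrow> real) set" where
  "Cb = {f. continuous_on UNIV f \<and> bounded (range f)}"

definition zero_sets :: "'a::topological_space set set" where
  "zero_sets = {f -` {0} | f. f \<in> Cb}"

inductive_set zalg :: "'a::topological_space set set" where
  zalg_zero: "A \<in> zero_sets \<Longrightarrow> A \<in> zalg"
| zalg_compl: "A \<in> zalg \<Longrightarrow> - A \<in> zalg"
| zalg_union: "A \<in> zalg \<Longrightarrow> B \<in> zalg \<Longrightarrow> A \<union> B \<in> zalg"

definition baire_sets :: "'a::topological_space set set" where
  "baire_sets = sigma_sets UNIV zero_sets"

definition baire_prob :: "'a::topological_space measure \<Rightarrow> bool" where
  "baire_prob M \<longleftrightarrow> prob_space M \<and> space M = UNIV \<and> sets M = baire_sets"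

definition M1 :: "('a::topological_space set \<Rightarrow> real) set" where
  "M1 = {\<gamma>. (\<forall>A\<in>zalg. \<gamma> A \<ge> 0)
          \<and> (\<forall>A\<in>zalg. \<forall>B\<in>zalg. A \<inter> B = {} \<longrightarrow> \<gamma> (A \<union> B) = \<gamma> A + \<gamma> B)
          \<and> \<gamma> UNIV = 1
          \<and> (\<forall>A\<in>zalg. \<forall>e>0. \<exists>F\<in>zero_sets. F \<subseteq> A \<and> \<gamma> (A - F) < e)}"

text \<open>A simple function is given by a list of (coefficient, set) pairs.\<close>
definition fa_integral :: "('a::topological_space set \<Rightarrow> real) \<Rightarrow> ('a \<Rightarrow> real) \<Rightarrow> real" where
  "fa_integral \<gamma> f = (THE r. \<forall>e>0. \<exists>s :: (real \<times> 'a set) list.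
      (\<forall>p\<in>set s. snd p \<in> zalg)
      \<and> (\<forall>x. \<bar>f x - (\<Sum>p\<leftarrow>s. fst p * indicator (snd p) x)\<bar> \<le> e)
      \<and> \<bar>r - (\<Sum>p\<leftarrow>s. fst p * \<gamma> (snd p))\<bar> \<le> e)"

definition lsc_bi :: "('a::topological_space \<Rightarrow> ereal) set" where
  "lsc_bi = {g. (\<forall>t. closed {x. g x \<le> t})
              \<and> (\<exists>x. g x \<noteq> \<infinity>)
              \<and> (\<exists>b::real. \<forall>x. ereal b \<le> g x)}"

definition lsc_integral :: "('a::topological_space set \<Rightarrow> real) \<Rightarrow> ('a \<Rightarrow> ereal) \<Rightarrow> ereal" where
  "lsc_integral \<gamma> g = Sup {ereal (fa_integral \<gamma> f) | f. f \<in> Cb \<and> (\<forall>x. ereal (f x) \<le> g x)}"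

definition oplus :: "('a \<Rightarrow> real) \<Rightarrow> ('b \<Rightarrow> real) \<Rightarrow> 'a \<times> 'b \<Rightarrow> real" where
  "oplus \<phi> \<psi> = (\<lambda>(x, y). \<phi> x + \<psi> y)"

definition Gamma :: "'a::topological_space measure \<Rightarrow> 'b::topological_space measure
    \<Rightarrow> (('a \<times> 'b) set \<Rightarrow> real) set" where
  "Gamma \<mu> \<nu> = {\<gamma> \<in> M1. \<forall>\<phi>\<in>Cb. \<forall>\<psi>\<in>Cb.
      fa_integral \<gamma> (oplus \<phi> \<psi>) = integral\<^sup>L \<mu> \<phi> + integral\<^sup>L \<nu> \<psi>}"

definition v_min :: "'a::topological_space measure \<Rightarrow> 'b::topological_space measure
    \<Rightarrow> ('a \<times> 'b \<Rightarrow> ereal) \<Rightarrow> ereal" where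
  "v_min \<mu> \<nu> c = (INF \<gamma>\<in>Gamma \<mu> \<nu>. lsc_integral \<gamma> c)"

definition OP_solution where
  "OP_solution \<mu> \<nu> c \<gamma> \<longleftrightarrow> \<gamma> \<in> Gamma \<mu> \<nu> \<and> lsc_integral \<gamma> c = v_min \<mu> \<nu> c"

definition DP_admissible :: "('a::topological_space \<times> 'b::topological_space \<Rightarrow> ereal)
    \<Rightarrow> ('a \<Rightarrow> real) \<Rightarrow> ('b \<Rightarrow> real) \<Rightarrow> bool" where
  "DP_admissible c \<phi> \<psi> \<longleftrightarrow> \<phi> \<in> Cb \<and> \<psi> \<in> Cb \<and> (\<forall>z. ereal (oplus \<phi> \<psi> z) \<le> c z)"

definition v_max :: "'a::topological_space measure \<Rightarrow> 'b::topological_space measure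
    \<Rightarrow> ('a \<times> 'b \<Rightarrow> ereal) \<Rightarrow> ereal" where
  "v_max \<mu> \<nu> c = Sup {ereal (integral\<^sup>L \<mu> \<phi> + integral\<^sup>L \<nu> \<psi>) | \<phi> \<psi>. DP_admissible c \<phi> \<psi>}"

definition DP_solution where
  "DP_solution \<mu> \<nu> c \<phi> \<psi> \<longleftrightarrow> DP_admissible c \<phi> \<psi>
      \<and> ereal (integral\<^sup>L \<mu> \<phi> + integral\<^sup>L \<nu> \<psi>) = v_max \<mu> \<nu> c"

end

theory Submission
  imports Defs
begin

lemma Cb_iff: "f \<in> Cb \<longleftrightarrow> continuous_on UNIV f \<and> (\<exists>B. \<forall>x. \<bar>f x\<bar> \<le> B)"
  unfolding Cb_def bounded_iff by auto

lemma CbI: "continuous_on UNIV f \<Longrightarrow> (\<And>x. \<bar>f x\<bar> \<le> B) \<Longrightarrow> f \<in> Cb"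
  unfolding Cb_iff by blast

lemma Cb_cont: "f \<in> Cb \<Longrightarrow> continuous_on UNIV f" by (simp add: Cb_iff)

lemma Cb_bound: assumes "f \<in> Cb" obtains B where "\<And>x. \<bar>f x\<bar> \<le> B" "B \<ge> 0"
  using assms unfolding Cb_iff by (meson abs_ge_zero order_trans)

lemma Cb_const[simp]: "(\<lambda>x. c) \<in> Cb"
  by (rule CbI[where B="\<bar>c\<bar>"]) auto

lemma Cb_add: assumes "f \<in> Cb" "g \<in> Cb" shows "(\<lambda>x. f x + g x) \<in> Cb"
proof -
  obtain A B where "\<And>x. \<bar>f x\<bar> \<le> A" "\<And>x. \<bar>g x\<bar> \<le> B" using assms Cb_bound by metis
  then show ?thesis using assms
    by (intro CbI[where B="A+B"]) (auto intro!: continuous_intros simp: Cb_cont abs_triangle_ineq[THEN order_trans] add_mono)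
qed

lemma Cb_mult: assumes "f \<in> Cb" "g \<in> Cb" shows "(\<lambda>x. f x * g x) \<in> Cb"
proof -
  obtain A B where AB: "\<And>x. \<bar>f x\<bar> \<le> A" "\<And>x. \<bar>g x\<bar> \<le> B" "B \<ge> 0" using assms Cb_bound by metis
  have "\<bar>f x * g x\<bar> \<le> A * B" for x
    unfolding abs_mult using AB by (intro mult_mono) (auto intro: order_trans[OF abs_ge_zero])
  then show ?thesis using assms
    by (intro CbI[where B="A*B"]) (auto intro!: continuous_intros simp: Cb_cont)
qed

lemma Cb_scale: "f \<in> Cb \<Longrightarrow> (\<lambda>x. c * f x) \<in> Cb"
  using Cb_mult[OF Cb_const] by blast

lemma Cb_minus: "f \<in> Cb \<Longrightarrow> (\<lambda>x. - f x) \<in> Cb"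
  using Cb_scale[of f "-1"] by simp

lemma Cb_diff: "f \<in> Cb \<Longrightarrow> g \<in> Cb \<Longrightarrow> (\<lambda>x. f x - g x) \<in> Cb"
  using Cb_add[OF _ Cb_minus] by simp

lemma Cb_abs: assumes "f \<in> Cb" shows "(\<lambda>x. \<bar>f x\<bar>) \<in> Cb"
proof -
  obtain A where "\<And>x. \<bar>f x\<bar> \<le> A" using assms Cb_bound by metis
  then show ?thesis using assms by (intro CbI[where B=A]) (auto intro!: continuous_intros simp: Cb_cont)
qed

lemma Cb_max: assumes "f \<in> Cb" "g \<in> Cb" shows "(\<lambda>x. max (f x) (g x)) \<in> Cb"
proof -
  obtain A B where "\<And>x. \<bar>f x\<bar> \<le> A" "\<And>x. \<bar>g x\<bar> \<le> B" using assms Cb_bound by metis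
  then have "\<bar>max (f x) (g x)\<bar> \<le> max A B" for x by (smt (verit))
  then show ?thesis using assms
    by (intro CbI[where B="max A B"]) (auto intro!: continuous_intros simp: Cb_cont)
qed

lemma Cb_min: assumes "f \<in> Cb" "g \<in> Cb" shows "(\<lambda>x. min (f x) (g x)) \<in> Cb"
proof -
  have "(\<lambda>x. min (f x) (g x)) = (\<lambda>x. - max (- f x) (- g x))" by (auto simp: min_def max_def)
  then show ?thesis using Cb_minus Cb_max assms by metis
qed

lemma Cb_div: assumes "f \<in> Cb" "g \<in> Cb" "\<And>x. g x \<noteq> 0" "\<And>x. \<bar>f x / g x\<bar> \<le> B"
  shows "(\<lambda>x. f x / g x) \<in> Cb"
  using assms by (intro CbI[where B=B]) (auto intro!: continuous_intros simp: Cb_cont)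

lemma zero_setsI: "f \<in> Cb \<Longrightarrow> Z = {x. f x = 0} \<Longrightarrow> Z \<in> zero_sets"
  unfolding zero_sets_def by (auto simp: vimage_def)

lemma zero_setsE: assumes "Z \<in> zero_sets" obtains f where "f \<in> Cb" "Z = {x. f x = 0}"
  using assms unfolding zero_sets_def by (auto simp: vimage_def)

lemma zero_sets_Int: assumes "A \<in> zero_sets" "B \<in> zero_sets" shows "A \<inter> B \<in> zero_sets"
proof -
  obtain f g where fg: "f \<in> Cb" "A = {x. f x = 0}" "g \<in> Cb" "B = {x. g x = 0}" using assms zero_setsE by metis
  show ?thesis
    by (rule zero_setsI[where f="\<lambda>x. \<bar>f x\<bar> + \<bar>g x\<bar>"]) (use fg Cb_add Cb_abs in auto)
qed

lemma zero_sets_Un: assumes "A \<in> zero_sets" "B \<in> zero_sets" shows "A \<union> B \<in> zero_sets"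
proof -
  obtain f g where fg: "f \<in> Cb" "A = {x. f x = 0}" "g \<in> Cb" "B = {x. g x = 0}" using assms zero_setsE by metis
  show ?thesis
    by (rule zero_setsI[where f="\<lambda>x. f x * g x"]) (use fg Cb_mult in auto)
qed

lemma zero_sets_le: assumes "f \<in> Cb" shows "{x. f x \<le> c} \<in> zero_sets"
  by (rule zero_setsI[where f="\<lambda>x. max (f x - c) 0"]) (use Cb_max[OF Cb_diff[OF assms Cb_const] Cb_const[of 0]] in \<open>auto\<close>)

lemma zero_sets_ge: assumes "f \<in> Cb" shows "{x. c \<le> f x} \<in> zero_sets"
  by (rule zero_setsI[where f="\<lambda>x. min (f x - c) 0"]) (use Cb_min[OF Cb_diff[OF assms Cb_const] Cb_const[of 0]] in \<open>auto\<close>)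

lemma zero_sets_UNIV: "UNIV \<in> zero_sets"
  by (rule zero_setsI[where f="\<lambda>x. 0"]) auto

lemma zero_sets_empty: "{} \<in> zero_sets"
  by (rule zero_setsI[where f="\<lambda>x. 1"]) auto

lemma zero_sets_sep:
  assumes "A \<in> zero_sets" "B \<in> zero_sets" "A \<inter> B = {}"
  obtains s where "s \<in> Cb" "\<And>x. 0 \<le> s x" "\<And>x. s x \<le> 1" "\<And>x. x \<in> A \<Longrightarrow> s x = 1" "\<And>x. x \<in> B \<Longrightarrow> s x = 0"
proof -
  obtain f g where fg: "f \<in> Cb" "A = {x. f x = 0}" "g \<in> Cb" "B = {x. g x = 0}" using assms zero_setsE by metis
  have pos: "\<bar>f x\<bar> + \<bar>g x\<bar> > 0" for x
  proof -
    have "f x \<noteq> 0 \<or> g x \<noteq> 0" using assms(3) fg by auto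
    then show ?thesis by (auto simp: add_pos_nonneg add_nonneg_pos)
  qed
  define s where "s x = \<bar>g x\<bar> / (\<bar>f x\<bar> + \<bar>g x\<bar>)" for x
  have le1: "s x \<le> 1" for x using pos[of x] by (simp add: s_def divide_le_eq_1)
  have ge0: "0 \<le> s x" for x by (simp add: s_def)
  have "s \<in> Cb" unfolding s_def
    apply (rule Cb_div[where B=1])
    using fg pos le1 ge0 by (auto intro: Cb_abs Cb_add simp: s_def) (metis less_irrefl)
  moreover have "f x = 0 \<Longrightarrow> s x = 1" for x using pos[of x] by (simp add: s_def)
  moreover have "g x = 0 \<Longrightarrow> s x = 0" for x by (simp add: s_def)
  ultimately show ?thesis using that le1 ge0 fg by auto
qed

lemma zero_sets_zalg: "A \<in> zero_sets \<Longrightarrow> A \<in> zalg" by (rule zalg_zero)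

lemma zalg_Int: "A \<in> zalg \<Longrightarrow> B \<in> zalg \<Longrightarrow> A \<inter> B \<in> zalg"
proof -
  assume "A \<in> zalg" "B \<in> zalg"
  then have "- (- A \<union> - B) \<in> zalg" by (intro zalg_compl zalg_union)
  then show ?thesis by simp
qed

lemma zalg_diff: "A \<in> zalg \<Longrightarrow> B \<in> zalg \<Longrightarrow> A - B \<in> zalg"
  using zalg_Int[OF _ zalg_compl] by (simp add: Diff_eq)

lemma zalg_UNIV: "UNIV \<in> zalg" using zalg_zero[OF zero_sets_UNIV] .

definition sublin :: "('z \<Rightarrow> real) set \<Rightarrow> (('z \<Rightarrow> real) \<Rightarrow> real) \<Rightarrow> bool" where
  "sublin S q \<longleftrightarrow> (\<forall>f\<in>S. \<forall>g\<in>S. q (\<lambda>x. f x + g x) \<le> q f + q g)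
                   \<and> (\<forall>f\<in>S. \<forall>a\<ge>0. q (\<lambda>x. a * f x) = a * q f)"

definition epi :: "('z \<Rightarrow> real) set \<Rightarrow> (('z \<Rightarrow> real) \<Rightarrow> real) \<Rightarrow> (('z \<Rightarrow> real) \<times> real) set" where
  "epi S q = {(f, r). f \<in> S \<and> q f < r}"

lemma epi_sub_le:
  assumes "epi S q1 \<subseteq> epi S q2" "f \<in> S" shows "q2 f \<le> q1 f"
proof (rule ccontr)
  assume "\<not> q2 f \<le> q1 f"
  then have "(f, (q1 f + q2 f)/2) \<in> epi S q1" "(f, (q1 f + q2 f)/2) \<notin> epi S q2"
    using assms(2) by (auto simp: epi_def)
  then show False using assms(1) by blast
qed

lemma le_epi_sub:
  assumes "\<And>f. f \<in> S \<Longrightarrow> q2 f \<le> q1 f" shows "epi S q1 \<subseteq> epi S q2"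
  using assms by (force simp: epi_def)

locale hb_setting =
  fixes S :: "('z \<Rightarrow> real) set" and p :: "('z \<Rightarrow> real) \<Rightarrow> real"
  assumes S0: "(\<lambda>x. 0) \<in> S"
    and Sadd: "\<And>f g. f \<in> S \<Longrightarrow> g \<in> S \<Longrightarrow> (\<lambda>x. f x + g x) \<in> S"
    and Ssc: "\<And>f a. f \<in> S \<Longrightarrow> (\<lambda>x. a * f x) \<in> S"
    and p_sublin: "sublin S p"
begin

lemma Sneg: "f \<in> S \<Longrightarrow> (\<lambda>x. - f x) \<in> S"
  using Ssc[of f "-1"] by simp

definition Q where "Q = {q. sublin S q \<and> (\<forall>f\<in>S. q f \<le> p f)}"

lemma sublin_hom: assumes "sublin S q" "f \<in> S" "a \<ge> 0" shows "q (\<lambda>x. a * f x) = a * q f"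
  using assms unfolding sublin_def by blast

lemma sublin_add: assumes "sublin S q" "f \<in> S" "g \<in> S" shows "q (\<lambda>x. f x + g x) \<le> q f + q g"
  using assms unfolding sublin_def by blast

lemma sublin_zero: assumes "sublin S q" shows "q (\<lambda>x. 0) = 0"
  using sublin_hom[OF assms S0, of 0] by simp

lemma sublin_neg: assumes "sublin S q" "f \<in> S" shows "- q (\<lambda>x. - f x) \<le> q f"
proof -
  have "q (\<lambda>x. f x + - f x) \<le> q f + q (\<lambda>x. - f x)"
    using sublin_add[OF assms(1) assms(2) Sneg[OF assms(2)]] .
  then show ?thesis using sublin_zero[OF assms(1)] by simp
qed

lemma Q_lower: assumes "q \<in> Q" "f \<in> S" shows "- p (\<lambda>x. - f x) \<le> q f"
proof -
  have "sublin S q" "q (\<lambda>x. - f x) \<le> p (\<lambda>x. - f x)" using assms Sneg unfolding Q_def by auto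
  then show ?thesis using sublin_neg[of q f] assms(2) by linarith
qed

lemma p_in_Q: "p \<in> Q" unfolding Q_def using p_sublin by auto

lemma chain_bound:
  assumes C: "C \<in> chains (epi S ` Q)"
  shows "\<exists>U\<in>epi S ` Q. \<forall>X\<in>C. X \<subseteq> U"
proof (cases "C = {}")
  case True then show ?thesis using p_in_Q by blast
next
  case False
  define QC where "QC = {q \<in> Q. epi S q \<in> C}"
  have CA: "C \<subseteq> epi S ` Q" and ch: "\<And>X Y. X \<in> C \<Longrightarrow> Y \<in> C \<Longrightarrow> X \<subseteq> Y \<or> Y \<subseteq> X"
    using C unfolding chains_def chain_subset_def by auto
  have QCne: "QC \<noteq> {}" using False CA unfolding QC_def by blast
  have QCQ: "QC \<subseteq> Q" unfolding QC_def by auto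
  define qi where "qi f = Inf ((\<lambda>q. q f) ` QC)" for f
  have bdd: "bdd_below ((\<lambda>q. q f) ` QC)" if "f \<in> S" for f
    using Q_lower[OF _ that] QCQ unfolding bdd_below_def by blast
  have qi_le: "qi f \<le> q f" if "q \<in> QC" "f \<in> S" for q f
    unfolding qi_def using bdd[OF that(2)] that by (simp add: cInf_lower)
  have qi_ge: "c \<le> qi f" if "\<And>q. q \<in> QC \<Longrightarrow> c \<le> q f" for c f
    unfolding qi_def using QCne that by (auto intro!: cInf_greatest)
  have qi_less: "\<exists>q\<in>QC. q f < y" if "qi f < y" "f \<in> S" for f y
    using that bdd[OF that(2)] QCne unfolding qi_def by (simp add: cInf_less_iff)
  have comp: "(\<forall>f\<in>S. q1 f \<le> q2 f) \<or> (\<forall>f\<in>S. q2 f \<le> q1 f)" if "q1 \<in> QC" "q2 \<in> QC" for q1 q2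
    using ch[of "epi S q1" "epi S q2"] that epi_sub_le unfolding QC_def by blast
  have qQ: "sublin S q" "\<forall>f\<in>S. q f \<le> p f" if "q \<in> QC" for q using that QCQ unfolding Q_def by auto
  have sub: "qi (\<lambda>x. f x + g x) \<le> qi f + qi g" if fg: "f \<in> S" "g \<in> S" for f g
  proof (rule field_le_epsilon)
    fix e :: real assume e: "e > 0"
    obtain q1 where q1: "q1 \<in> QC" "q1 f < qi f + e/2" using qi_less[of f "qi f + e/2"] fg e by auto
    obtain q2 where q2: "q2 \<in> QC" "q2 g < qi g + e/2" using qi_less[of g "qi g + e/2"] fg e by auto
    show "qi (\<lambda>x. f x + g x) \<le> qi f + qi g + e"
    proof (cases "\<forall>h\<in>S. q1 h \<le> q2 h")
      case True
      have "qi (\<lambda>x. f x + g x) \<le> q1 (\<lambda>x. f x + g x)" using qi_le q1 Sadd fg by blast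
      also have "\<dots> \<le> q1 f + q1 g" using sublin_add[OF qQ(1)[OF q1(1)] fg] .
      also have "\<dots> \<le> q1 f + q2 g" using True fg by auto
      finally show ?thesis using q1 q2 by simp
    next
      case False
      then have T: "\<forall>h\<in>S. q2 h \<le> q1 h" using comp[OF q1(1) q2(1)] by blast
      have "qi (\<lambda>x. f x + g x) \<le> q2 (\<lambda>x. f x + g x)" using qi_le q2 Sadd fg by blast
      also have "\<dots> \<le> q2 f + q2 g" using sublin_add[OF qQ(1)[OF q2(1)] fg] .
      also have "\<dots> \<le> q1 f + q2 g" using T fg by auto
      finally show ?thesis using q1 q2 by simp
    qed
  qed
  have hom: "qi (\<lambda>x. a * f x) = a * qi f" if f: "f \<in> S" and a: "a \<ge> 0" for f a
  proof (cases "a = 0")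
    case True
    have "q (\<lambda>x. 0) = 0" if "q \<in> QC" for q using sublin_zero qQ(1)[OF that] by blast
    then have "(\<lambda>q. q (\<lambda>x. 0)) ` QC = {0}" using QCne by (auto simp: image_iff)
    then show ?thesis using True unfolding qi_def by simp
  next
    case False
    then have a0: "a > 0" using a by simp
    have eq: "q (\<lambda>x. a * f x) = a * q f" if "q \<in> QC" for q
      using sublin_hom[OF qQ(1)[OF that] f a] .
    have "qi (\<lambda>x. a * f x) \<le> a * qi f"
    proof -
      have "qi (\<lambda>x. a * f x) / a \<le> qi f"
      proof (rule qi_ge)
        fix q assume "q \<in> QC"
        then show "qi (\<lambda>x. a * f x) / a \<le> q f"
          using qi_le[of q "\<lambda>x. a * f x"] Ssc[OF f] eq a0 by (simp add: divide_le_eq mult.commute)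
      qed
      then show ?thesis using a0 by (simp add: divide_le_eq mult.commute)
    qed
    moreover have "a * qi f \<le> qi (\<lambda>x. a * f x)"
    proof (rule qi_ge)
      fix q assume q: "q \<in> QC"
      show "a * qi f \<le> q (\<lambda>x. a * f x)" using qi_le[OF q f] eq[OF q] a0 by simp
    qed
    ultimately show ?thesis by simp
  qed
  have qiQ: "qi \<in> Q"
  proof -
    obtain q0 where "q0 \<in> QC" using QCne by blast
    then have "\<forall>f\<in>S. qi f \<le> p f" using qi_le qQ(2) by (meson order_trans)
    moreover have "sublin S qi" unfolding sublin_def using sub hom by simp
    ultimately show ?thesis unfolding Q_def by blast
  qed
  have "\<forall>X\<in>C. X \<subseteq> epi S qi"
  proof
    fix X assume "X \<in> C"
    then obtain q where "q \<in> Q" "X = epi S q" using CA by blast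
    then have "q \<in> QC" using \<open>X \<in> C\<close> unfolding QC_def by blast
    then show "X \<subseteq> epi S qi" unfolding \<open>X = epi S q\<close> by (intro le_epi_sub qi_le)
  qed
  then show ?thesis using qiQ by blast
qed

lemma minimal_exists: "\<exists>qm\<in>Q. \<forall>q\<in>Q. (\<forall>f\<in>S. q f \<le> qm f) \<longrightarrow> (\<forall>f\<in>S. q f = qm f)"
proof -
  have "\<forall>C\<in>chains (epi S ` Q). \<exists>U\<in>epi S ` Q. \<forall>X\<in>C. X \<subseteq> U" using chain_bound by blast
  from Zorn_Lemma2[OF this] obtain M where M: "M \<in> epi S ` Q" "\<forall>X\<in>epi S ` Q. M \<subseteq> X \<longrightarrow> X = M"
    by blast
  then obtain qm where qm: "qm \<in> Q" "M = epi S qm" by blast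
  have "\<forall>f\<in>S. q f = qm f" if "q \<in> Q" "\<forall>f\<in>S. q f \<le> qm f" for q
  proof -
    have "epi S qm \<subseteq> epi S q" using that(2) by (intro le_epi_sub) auto
    moreover have "epi S q \<in> epi S ` Q" using that(1) by blast
    ultimately have "epi S q = epi S qm" using M(2) qm(2) by blast
    then have "\<forall>f\<in>S. qm f \<le> q f" using epi_sub_le[of S q qm] by simp
    then show ?thesis using that(2) by (simp add: order_antisym)
  qed
  then show ?thesis using qm(1) by blast
qed

lemma minimal_linear:
  assumes qm: "qm \<in> Q" and mini: "\<forall>q\<in>Q. (\<forall>f\<in>S. q f \<le> qm f) \<longrightarrow> (\<forall>f\<in>S. q f = qm f)"
    and x: "x \<in> S"
  shows "qm (\<lambda>z. - x z) = - qm x"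
proof -
  have sq: "sublin S qm" and qp: "\<forall>f\<in>S. qm f \<le> p f" using qm unfolding Q_def by auto
  have qadd: "qm (\<lambda>z. f z + g z) \<le> qm f + qm g" if "f \<in> S" "g \<in> S" for f g
    using sublin_add[OF sq that] .
  have qhom: "qm (\<lambda>z. a * f z) = a * qm f" if "f \<in> S" "a \<ge> 0" for f a
    using sublin_hom[OF sq that] .
  define T where "T y = (\<lambda>t. qm (\<lambda>z. y z + t * x z) - t * qm x) ` {0..}" for y
  define q' where "q' y = Inf (T y)" for y
  have Tne: "T y \<noteq> {}" for y unfolding T_def by auto
  have Tlow: "- qm (\<lambda>z. - y z) \<le> v" if "v \<in> T y" "y \<in> S" for v y
  proof -
    from that(1) obtain t where t: "t \<ge> 0" "v = qm (\<lambda>z. y z + t * x z) - t * qm x" unfolding T_def by auto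
    have yt: "(\<lambda>z. y z + t * x z) \<in> S" using Sadd Ssc x that(2) by blast
    have "qm (\<lambda>z. t * x z) = qm (\<lambda>z. (y z + t * x z) + - y z)" by simp
    also have "\<dots> \<le> qm (\<lambda>z. y z + t * x z) + qm (\<lambda>z. - y z)" using qadd[OF yt Sneg[OF that(2)]] .
    finally show ?thesis using qhom[OF x t(1)] t by simp
  qed
  have bdd: "bdd_below (T y)" if "y \<in> S" for y using Tlow that unfolding bdd_below_def by blast
  have q'_le: "q' y \<le> qm (\<lambda>z. y z + t * x z) - t * qm x" if "y \<in> S" "t \<ge> 0" for y t
    unfolding q'_def using bdd[OF that(1)] that(2) by (intro cInf_lower) (auto simp: T_def)
  have q'_ge: "c \<le> q' y" if "\<And>t. t \<ge> 0 \<Longrightarrow> c \<le> qm (\<lambda>z. y z + t * x z) - t * qm x" for c y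
    unfolding q'_def using Tne that by (intro cInf_greatest) (auto simp: T_def)
  have q'_qm: "q' y \<le> qm y" if "y \<in> S" for y using q'_le[OF that, of 0] by simp
  have sub: "q' (\<lambda>z. f z + g z) \<le> q' f + q' g" if fg: "f \<in> S" "g \<in> S" for f g
  proof -
    have key: "q' (\<lambda>z. f z + g z) \<le> (qm (\<lambda>z. f z + t1 * x z) - t1 * qm x) + (qm (\<lambda>z. g z + t2 * x z) - t2 * qm x)"
      if t: "t1 \<ge> 0" "t2 \<ge> 0" for t1 t2
    proof -
      have "q' (\<lambda>z. f z + g z) \<le> qm (\<lambda>z. (f z + g z) + (t1 + t2) * x z) - (t1 + t2) * qm x"
        using q'_le[of "\<lambda>z. f z + g z" "t1 + t2"] Sadd fg t by simp
      also have "qm (\<lambda>z. (f z + g z) + (t1 + t2) * x z) = qm (\<lambda>z. (f z + t1 * x z) + (g z + t2 * x z))"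
        by (simp add: algebra_simps)
      also have "\<dots> \<le> qm (\<lambda>z. f z + t1 * x z) + qm (\<lambda>z. g z + t2 * x z)"
        using qadd[OF Sadd[OF fg(1) Ssc[OF x]] Sadd[OF fg(2) Ssc[OF x]]] .
      finally show ?thesis by (simp add: algebra_simps)
    qed
    have "q' (\<lambda>z. f z + g z) - q' g \<le> q' f"
    proof (rule q'_ge)
      fix t1 :: real assume t1: "t1 \<ge> 0"
      have "q' (\<lambda>z. f z + g z) - (qm (\<lambda>z. f z + t1 * x z) - t1 * qm x) \<le> q' g"
      proof (rule q'_ge)
        fix t2 :: real assume t2: "t2 \<ge> 0"
        show "q' (\<lambda>z. f z + g z) - (qm (\<lambda>z. f z + t1 * x z) - t1 * qm x) \<le> qm (\<lambda>z. g z + t2 * x z) - t2 * qm x"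
          using key[OF t1 t2] by linarith
      qed
      then show "q' (\<lambda>z. f z + g z) - q' g \<le> qm (\<lambda>z. f z + t1 * x z) - t1 * qm x" by simp
    qed
    then show ?thesis by simp
  qed
  have hom: "q' (\<lambda>z. a * y z) = a * q' y" if y: "y \<in> S" and a: "a \<ge> 0" for y a
  proof (cases "a = 0")
    case True
    have "T (\<lambda>z. 0) = {0}" unfolding T_def using qhom[OF x] by auto
    then show ?thesis using True unfolding q'_def by simp
  next
    case False
    then have a0: "a > 0" using a by simp
    have ay: "(\<lambda>z. a * y z) \<in> S" using Ssc y by blast
    have e1: "qm (\<lambda>z. a * y z + (a * s) * x z) = a * qm (\<lambda>z. y z + s * x z)" if "s \<ge> 0" for s
    proof -
      have "qm (\<lambda>z. a * y z + (a * s) * x z) = qm (\<lambda>z. a * (y z + s * x z))" by (simp add: algebra_simps)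
      also have "\<dots> = a * qm (\<lambda>z. y z + s * x z)" using qhom[OF Sadd[OF y Ssc[OF x]] a] .
      finally show ?thesis .
    qed
    have "q' (\<lambda>z. a * y z) \<le> a * q' y"
    proof -
      have "q' (\<lambda>z. a * y z) / a \<le> q' y"
      proof (rule q'_ge)
        fix s :: real assume s: "s \<ge> 0"
        have "q' (\<lambda>z. a * y z) \<le> qm (\<lambda>z. a * y z + (a * s) * x z) - (a * s) * qm x"
          using q'_le[OF ay] s a0 by simp
        also have "\<dots> = a * (qm (\<lambda>z. y z + s * x z) - s * qm x)" using e1[OF s] by (simp add: algebra_simps)
        finally show "q' (\<lambda>z. a * y z) / a \<le> qm (\<lambda>z. y z + s * x z) - s * qm x"
          using a0 by (simp add: divide_le_eq mult.commute)
      qed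
      then show ?thesis using a0 by (simp add: divide_le_eq mult.commute)
    qed
    moreover have "a * q' y \<le> q' (\<lambda>z. a * y z)"
    proof (rule q'_ge)
      fix t :: real assume t: "t \<ge> 0"
      have "q' y \<le> qm (\<lambda>z. y z + (t / a) * x z) - (t / a) * qm x" using q'_le[OF y, of "t/a"] t a0 by simp
      then have "a * q' y \<le> a * (qm (\<lambda>z. y z + (t / a) * x z) - (t / a) * qm x)"
        using a0 by simp
      also have "\<dots> = qm (\<lambda>z. a * y z + (a * (t / a)) * x z) - t * qm x"
        using e1[of "t/a"] t a0 by (simp add: algebra_simps)
      also have "\<dots> = qm (\<lambda>z. a * y z + t * x z) - t * qm x" using a0 by simp
      finally show "a * q' y \<le> qm (\<lambda>z. a * y z + t * x z) - t * qm x" .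
    qed
    ultimately show ?thesis by simp
  qed
  have "sublin S q'" unfolding sublin_def using sub hom by simp
  moreover have "\<forall>f\<in>S. q' f \<le> p f" using q'_qm qp by (meson order_trans)
  ultimately have "q' \<in> Q" unfolding Q_def by simp
  then have eq: "\<forall>f\<in>S. q' f = qm f" using mini q'_qm by simp
  have "qm (\<lambda>z. - x z) = q' (\<lambda>z. - x z)" using eq Sneg[OF x] by simp
  also have "\<dots> \<le> qm (\<lambda>z. - x z + 1 * x z) - 1 * qm x" using q'_le[of "\<lambda>z. - x z" 1] Sneg x by simp
  also have "\<dots> = - qm x" using sublin_zero[OF sq] by simp
  finally show ?thesis using sublin_neg[OF sq x] by simp
qed

theorem hahn_banach:
  "\<exists>L. (\<forall>f\<in>S. \<forall>g\<in>S. L (\<lambda>x. f x + g x) = L f + L g) \<and> (\<forall>f\<in>S. \<forall>a. L (\<lambda>x. a * f x) = a * L f)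
      \<and> (\<forall>f\<in>S. L f \<le> p f)"
proof -
  obtain qm where qm: "qm \<in> Q" and mini: "\<forall>q\<in>Q. (\<forall>f\<in>S. q f \<le> qm f) \<longrightarrow> (\<forall>f\<in>S. q f = qm f)"
    using minimal_exists by blast
  have sq: "sublin S qm" and qp: "\<forall>f\<in>S. qm f \<le> p f" using qm unfolding Q_def by auto
  have neg: "qm (\<lambda>z. - x z) = - qm x" if "x \<in> S" for x using minimal_linear[OF qm mini that] .
  have add: "qm (\<lambda>x. f x + g x) = qm f + qm g" if "f \<in> S" "g \<in> S" for f g
  proof -
    have "qm (\<lambda>x. f x + g x) \<le> qm f + qm g" using sublin_add[OF sq that] .
    moreover have "qm (\<lambda>x. - f x + - g x) \<le> qm (\<lambda>x. - f x) + qm (\<lambda>x. - g x)"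
      using sublin_add[OF sq Sneg[OF that(1)] Sneg[OF that(2)]] .
    moreover have "qm (\<lambda>x. - f x + - g x) = - qm (\<lambda>x. f x + g x)"
      using neg[OF Sadd[OF that]] by simp
    ultimately show ?thesis using neg that by simp
  qed
  have sc: "qm (\<lambda>x. a * f x) = a * qm f" if "f \<in> S" for f a
  proof (cases "a \<ge> 0")
    case True show ?thesis using sublin_hom[OF sq that True] .
  next
    case False
    have "qm (\<lambda>x. a * f x) = qm (\<lambda>x. - ((- a) * f x))" by simp
    also have "\<dots> = - qm (\<lambda>x. (- a) * f x)" using neg[OF Ssc[OF that]] .
    also have "\<dots> = - ((- a) * qm f)" using sublin_hom[OF sq that, of "-a"] False by simp
    finally show ?thesis by simp
  qed
  show ?thesis by (rule exI[where x=qm]) (use add sc qp in simp)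
qed

end

lemma Cb_simple_approx:
  fixes F :: "'z::topological_space \<Rightarrow> real"
  assumes F: "F \<in> Cb" and e: "e > 0"
  shows "\<exists>s :: (real \<times> 'z set) list. (\<forall>p\<in>set s. snd p \<in> zalg)
           \<and> (\<forall>x. \<bar>F x - (\<Sum>p\<leftarrow>s. fst p * indicator (snd p) x)\<bar> \<le> e)"
proof -
  obtain M where M: "\<And>x. \<bar>F x\<bar> \<le> M" "M \<ge> 0" using Cb_bound[OF F] by metis
  define K :: int where "K = \<lceil>M / e\<rceil> + 1"
  define A where "A j = {x. floor (F x / e) = j}" for j :: int
  define s where "s = map (\<lambda>j. (of_int j * e, A j)) [-K..K]"
  have Aeq: "A j = {x. of_int j * e \<le> F x} - {x. (of_int j + 1) * e \<le> F x}" for j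
  proof -
    have "floor (F x / e) = j \<longleftrightarrow> of_int j * e \<le> F x \<and> \<not> (of_int j + 1) * e \<le> F x" for x
      using e by (simp add: floor_eq_iff pos_le_divide_eq pos_divide_less_eq not_le)
    then show ?thesis unfolding A_def by auto
  qed
  have Azalg: "A j \<in> zalg" for j
    unfolding Aeq by (intro zalg_diff zalg_zero zero_sets_ge F)
  have "\<forall>p\<in>set s. snd p \<in> zalg" unfolding s_def using Azalg by auto
  moreover have "\<bar>F x - (\<Sum>p\<leftarrow>s. fst p * indicator (snd p) x)\<bar> \<le> e" for x
  proof -
    define j0 where "j0 = floor (F x / e)"
    have "(\<Sum>p\<leftarrow>s. fst p * indicator (snd p) x) = (\<Sum>j\<leftarrow>[-K..K]. of_int j * e * indicator (A j) x)"
      unfolding s_def by (simp add: comp_def)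
    also have "\<dots> = (\<Sum>j\<in>{-K..K}. of_int j * e * indicator (A j) x)"
      using sum_set_upto_conv_sum_list_int[of "\<lambda>j. of_int j * e * indicator (A j) x" "-K" K] by simp
    also have "\<dots> = (\<Sum>j\<in>{-K..K}. if j = j0 then of_int j * e else 0)"
      by (intro sum.cong) (auto simp: A_def j0_def indicator_def)
    also have "\<dots> = of_int j0 * e"
    proof -
      have "\<bar>F x / e\<bar> \<le> M / e" using M e by (simp add: abs_divide divide_right_mono)
      then have "\<bar>F x / e\<bar> \<le> of_int \<lceil>M / e\<rceil>" by (meson le_of_int_ceiling order_trans)
      then have h: "- of_int \<lceil>M / e\<rceil> \<le> F x / e" "F x / e \<le> of_int \<lceil>M / e\<rceil>"
        using abs_le_D1 abs_le_D2 by (fastforce, fastforce)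
      have "- K \<le> j0" unfolding j0_def K_def using h(1) by (simp add: le_floor_iff)
      moreover have "j0 \<le> K" unfolding j0_def K_def using h(2) by (simp add: floor_le_iff)
      ultimately show ?thesis by (simp add: sum.delta)
    qed
    finally have eq: "(\<Sum>p\<leftarrow>s. fst p * indicator (snd p) x) = of_int j0 * e" .
    have "of_int j0 \<le> F x / e" "F x / e < of_int j0 + 1" unfolding j0_def by linarith+
    then have "of_int j0 * e \<le> F x" "F x < (of_int j0 + 1) * e" using e
      by (simp_all add: pos_le_divide_eq pos_divide_less_eq)
    then show ?thesis unfolding eq by (simp add: algebra_simps)
  qed
  ultimately show ?thesis by blast
qed

definition usum :: "(real \<times> 'z set) list \<Rightarrow> 'z \<Rightarrow> real" where
  "usum ts x = (\<Sum>p\<leftarrow>ts. fst p * indicator (snd p) x)"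

definition valid :: "(real \<times> 'z::topological_space set) list \<Rightarrow> bool" where
  "valid ts \<longleftrightarrow> (\<forall>p\<in>set ts. 0 \<le> fst p \<and> snd p \<in> zero_sets)"

lemma usum_Nil[simp]: "usum [] x = 0" by (simp add: usum_def)
lemma usum_Cons[simp]: "usum (p # ts) x = fst p * indicator (snd p) x + usum ts x" by (simp add: usum_def)
lemma usum_append: "usum (ts1 @ ts2) x = usum ts1 x + usum ts2 x" by (simp add: usum_def)
lemma usum_scale: "usum (map (\<lambda>p. (a * fst p, snd p)) ts) x = a * usum ts x"
  by (induction ts) (simp_all add: algebra_simps)
lemma valid_Nil[simp]: "valid []" by (simp add: valid_def)
lemma valid_Cons[simp]: "valid (p # ts) \<longleftrightarrow> 0 \<le> fst p \<and> snd p \<in> zero_sets \<and> valid ts"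
  by (simp add: valid_def)
lemma valid_append: "valid ts1 \<Longrightarrow> valid ts2 \<Longrightarrow> valid (ts1 @ ts2)" by (auto simp: valid_def)
lemma valid_scale: "a \<ge> 0 \<Longrightarrow> valid ts \<Longrightarrow> valid (map (\<lambda>p. (a * fst p, snd p)) ts)"
  by (auto simp: valid_def)
lemma usum_nonneg: "valid ts \<Longrightarrow> 0 \<le> usum ts x"
  by (induction ts) auto

lemma zero_sets_usum:
  assumes g: "g \<in> Cb" shows "valid ts \<Longrightarrow> {x. g x - usum ts x \<le> c} \<in> zero_sets"
proof (induction ts arbitrary: c)
  case Nil then show ?case using zero_sets_le[OF g] by simp
next
  case (Cons p ts)
  obtain t Z where p: "p = (t, Z)" by (cases p)
  have t: "t \<ge> 0" and Z: "Z \<in> zero_sets" and v: "valid ts" using Cons.prems p by auto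
  have "{x. g x - usum (p # ts) x \<le> c} = (Z \<inter> {x. g x - usum ts x \<le> c + t}) \<union> {x. g x - usum ts x \<le> c}"
    using t by (auto simp: p indicator_def)
  then show ?case using Cons.IH[OF v] Z by (simp add: zero_sets_Int zero_sets_Un)
qed

definition Bd :: "('z \<Rightarrow> real) set" where "Bd = {F. \<exists>M. \<forall>x. \<bar>F x\<bar> \<le> M}"

lemma BdI: "(\<And>x. \<bar>F x\<bar> \<le> M) \<Longrightarrow> F \<in> Bd" unfolding Bd_def by blast
lemma BdE: assumes "F \<in> Bd" obtains M where "\<And>x. \<bar>F x\<bar> \<le> M" "M \<ge> 0"
proof -
  obtain M where M: "\<And>x. \<bar>F x\<bar> \<le> M" using assms unfolding Bd_def by blast
  then have "M \<ge> 0" by (meson abs_ge_zero order_trans)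
  then show ?thesis using M that by blast
qed
lemma Cb_Bd: "F \<in> Cb \<Longrightarrow> F \<in> Bd" unfolding Bd_def Cb_iff by blast
lemma Bd_add: assumes "F \<in> Bd" "G \<in> Bd" shows "(\<lambda>x. F x + G x) \<in> Bd"
proof -
  obtain M N where "\<And>x. \<bar>F x\<bar> \<le> M" "\<And>x. \<bar>G x\<bar> \<le> N" using assms BdE by metis
  then show ?thesis by (intro BdI[where M="M+N"]) (meson abs_triangle_ineq add_mono order_trans)
qed
lemma Bd_scale: assumes "F \<in> Bd" shows "(\<lambda>x. a * F x) \<in> Bd"
proof -
  obtain M where M: "\<And>x. \<bar>F x\<bar> \<le> M" "M \<ge> 0" using assms BdE by metis
  have "\<bar>a * F x\<bar> \<le> \<bar>a\<bar> * M" for x unfolding abs_mult using M by (simp add: mult_left_mono)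
  then show ?thesis by (rule BdI)
qed
lemma Bd_zero: "(\<lambda>x. 0) \<in> Bd" by (rule BdI[where M=0]) simp
lemma Bd_indicator: "indicator A \<in> Bd" by (rule BdI[where M=1]) (simp add: indicator_def)
lemma Bd_simple: "(\<lambda>x. \<Sum>p\<leftarrow>s. fst p * indicator (snd p) x) \<in> Bd"
proof (induction s)
  case Nil then show ?case using Bd_zero by simp
next
  case (Cons p s)
  have "(\<lambda>x. fst p * indicator (snd p) x) \<in> Bd" using Bd_scale[OF Bd_indicator] .
  from Bd_add[OF this Cons.IH] show ?case by simp
qed

locale pos_lin =
  fixes L :: "('z::topological_space \<Rightarrow> real) \<Rightarrow> real"
  assumes Ladd: "f \<in> Cb \<Longrightarrow> g \<in> Cb \<Longrightarrow> L (\<lambda>x. f x + g x) = L f + L g"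
    and Lsc: "f \<in> Cb \<Longrightarrow> L (\<lambda>x. a * f x) = a * L f"
    and Lpos: "f \<in> Cb \<Longrightarrow> (\<And>x. 0 \<le> f x) \<Longrightarrow> 0 \<le> L f"
    and L1: "L (\<lambda>x. 1) = 1"
begin

lemma L_const: "L (\<lambda>x. c) = c"
  using Lsc[of "\<lambda>x. 1" c] L1 by simp

lemma L_lin: assumes f: "f \<in> Cb" and h: "h \<in> Cb" shows "L (\<lambda>x. f x + a * h x + b) = L f + a * L h + b"
proof -
  have ah: "(\<lambda>x. a * h x) \<in> Cb" using Cb_scale[OF h] .
  have fah: "(\<lambda>x. f x + a * h x) \<in> Cb" using Cb_add[OF f ah] .
  have "L (\<lambda>x. f x + a * h x + b) = L (\<lambda>x. f x + a * h x) + L (\<lambda>x. b)"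
    using Ladd[OF fah Cb_const] .
  also have "\<dots> = L f + a * L h + b" using Ladd[OF f ah] Lsc[OF h] L_const by simp
  finally show ?thesis .
qed

lemma L_add_const: "f \<in> Cb \<Longrightarrow> L (\<lambda>x. f x + c) = L f + c"
  using Ladd[of f "\<lambda>x. c"] L_const by simp

lemma L_mono: assumes "f \<in> Cb" "g \<in> Cb" "\<And>x. f x \<le> g x" shows "L f \<le> L g"
proof -
  have c: "(\<lambda>x. g x + (-1) * f x + 0) \<in> Cb" using assms by (intro Cb_add Cb_scale Cb_const)
  have "0 \<le> L (\<lambda>x. g x + (-1) * f x + 0)"
    by (rule Lpos[OF c]) (use assms in auto)
  then show ?thesis unfolding L_lin[OF assms(2) assms(1), of "-1" 0] by simp
qed

definition gamma0 :: "'z set \<Rightarrow> real" where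
  "gamma0 Z = Inf (L ` {g \<in> Cb. \<forall>x. indicator Z x \<le> g x})"

lemma gamma0_le: assumes "g \<in> Cb" "\<And>x. indicator Z x \<le> g x" shows "gamma0 Z \<le> L g"
proof -
  have "bdd_below (L ` {g \<in> Cb. \<forall>x. indicator Z x \<le> g x})"
    unfolding bdd_below_def
    by (rule exI[where x=0]) (auto intro!: Lpos intro: order_trans[OF indicator_pos_le])
  then show ?thesis unfolding gamma0_def using assms by (intro cInf_lower) auto
qed

lemma gamma0_less: assumes "gamma0 Z < y"
  obtains g where "g \<in> Cb" "\<And>x. indicator Z x \<le> g x" "L g < y"
proof -
  have ne: "L ` {g \<in> Cb. \<forall>x. indicator Z x \<le> g x} \<noteq> {}"
    using Cb_const[of 1] by (auto simp: indicator_def intro!: exI[where x="\<lambda>x. 1"])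
  have "bdd_below (L ` {g \<in> Cb. \<forall>x. indicator Z x \<le> g x})"
    unfolding bdd_below_def
    by (rule exI[where x=0]) (auto intro!: Lpos intro: order_trans[OF indicator_pos_le])
  then show ?thesis using assms ne that unfolding gamma0_def by (auto simp: cInf_less_iff)
qed

definition wsum :: "(real \<times> 'z set) list \<Rightarrow> real" where
  "wsum ts = (\<Sum>p\<leftarrow>ts. fst p * gamma0 (snd p))"

lemma wsum_Nil[simp]: "wsum [] = 0" by (simp add: wsum_def)
lemma wsum_Cons[simp]: "wsum (p # ts) = fst p * gamma0 (snd p) + wsum ts" by (simp add: wsum_def)
lemma wsum_append: "wsum (ts1 @ ts2) = wsum ts1 + wsum ts2" by (simp add: wsum_def)
lemma wsum_scale: "wsum (map (\<lambda>p. (a * fst p, snd p)) ts) = a * wsum ts"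
  by (induction ts) (simp_all add: algebra_simps)

lemma key_ineq:
  "valid ts \<Longrightarrow> g \<in> Cb \<Longrightarrow> (\<And>x. usum ts x \<le> g x) \<Longrightarrow> wsum ts \<le> L g"
proof (induction ts arbitrary: g)
  case Nil then show ?case by (auto intro: Lpos)
next
  case (Cons p ts)
  obtain t Z where p: "p = (t, Z)" by (cases p)
  have t: "t \<ge> 0" and Z: "Z \<in> zero_sets" and v: "valid ts" using Cons.prems p by auto
  have g: "g \<in> Cb" by fact
  have ge: "t * indicator Z x + usum ts x \<le> g x" for x using Cons.prems(3)[of x] p by simp
  show ?case
  proof (rule field_le_epsilon)
    fix e :: real assume e: "e > 0"
    define C where "C = {x. g x - usum ts x \<le> t - e}"
    have C: "C \<in> zero_sets" unfolding C_def using zero_sets_usum[OF g v] .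
    have disj: "Z \<inter> C = {}"
    proof -
      have "x \<notin> C" if "x \<in> Z" for x using ge[of x] that e by (simp add: C_def)
      then show ?thesis by blast
    qed
    obtain s where s: "s \<in> Cb" "\<And>x. 0 \<le> s x" "\<And>x. s x \<le> 1" "\<And>x. x \<in> Z \<Longrightarrow> s x = 1" "\<And>x. x \<in> C \<Longrightarrow> s x = 0"
      using zero_sets_sep[OF Z C disj] by metis
    define g2 where "g2 x = g x + (- t) * s x + e" for x
    have g2: "g2 \<in> Cb" unfolding g2_def using g s(1) by (intro Cb_add Cb_scale Cb_const)
    have "usum ts x \<le> g2 x" for x
    proof (cases "s x = 0")
      case True
      have "0 \<le> t * indicator Z x" using t by simp
      then show ?thesis using ge[of x] True e by (simp add: g2_def)
    next
      case False
      then have "x \<notin> C" using s(5) by blast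
      then have "g x - usum ts x > t - e" by (simp add: C_def)
      moreover have "t * s x \<le> t" using s(3)[of x] t by (simp add: mult_left_le)
      ultimately show ?thesis by (simp add: g2_def)
    qed
    then have IH: "wsum ts \<le> L g2" using Cons.IH[OF v g2] by blast
    have Lg2: "L g2 = L g + (- t) * L s + e" unfolding g2_def by (rule L_lin[OF g s(1)])
    have "gamma0 Z \<le> L s"
      using s by (intro gamma0_le) (auto simp: indicator_def)
    then have "t * gamma0 Z \<le> t * L s" using t by (simp add: mult_left_mono)
    then show "wsum (p # ts) \<le> L g + e" using IH Lg2 p by simp
  qed
qed

definition Pset :: "('z \<Rightarrow> real) \<Rightarrow> real set" where
  "Pset F = {L g - wsum ts | g ts. g \<in> Cb \<and> valid ts \<and> (\<forall>x. F x + usum ts x \<le> g x)}"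

definition P :: "('z \<Rightarrow> real) \<Rightarrow> real" where "P F = Inf (Pset F)"

lemma PsetI: "g \<in> Cb \<Longrightarrow> valid ts \<Longrightarrow> (\<And>x. F x + usum ts x \<le> g x) \<Longrightarrow> L g - wsum ts \<in> Pset F"
  unfolding Pset_def by blast

lemma Pset_ne: assumes "F \<in> Bd" shows "Pset F \<noteq> {}"
proof -
  obtain M where "\<And>x. \<bar>F x\<bar> \<le> M" using assms BdE by metis
  then have "L (\<lambda>x. M) - wsum [] \<in> Pset F" by (intro PsetI) (auto simp: abs_le_iff)
  then show ?thesis by blast
qed

lemma Pset_lb: assumes "\<And>x. \<bar>F x\<bar> \<le> M" "e \<in> Pset F" shows "- M \<le> e"
proof -
  obtain g ts where e: "e = L g - wsum ts" "g \<in> Cb" "valid ts" "\<And>x. F x + usum ts x \<le> g x"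
    using assms(2) unfolding Pset_def by blast
  have "usum ts x \<le> g x + M" for x using e(4)[of x] assms(1)[of x] by (simp add: abs_le_iff)
  then have "wsum ts \<le> L (\<lambda>x. g x + M)" using e(2,3) by (intro key_ineq Cb_add Cb_const) auto
  then show ?thesis using e(1) L_add_const[OF e(2)] by simp
qed

lemma Pset_bdd: assumes "F \<in> Bd" shows "bdd_below (Pset F)"
proof -
  obtain M where "\<And>x. \<bar>F x\<bar> \<le> M" using assms BdE by metis
  then show ?thesis unfolding bdd_below_def using Pset_lb by blast
qed

lemma P_le: "F \<in> Bd \<Longrightarrow> e \<in> Pset F \<Longrightarrow> P F \<le> e"
  unfolding P_def using Pset_bdd by (simp add: cInf_lower)

lemma P_ge: "F \<in> Bd \<Longrightarrow> (\<And>e. e \<in> Pset F \<Longrightarrow> c \<le> e) \<Longrightarrow> c \<le> P F"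
  unfolding P_def using Pset_ne by (simp add: cInf_greatest)

lemma P_lb: "F \<in> Bd \<Longrightarrow> (\<And>x. \<bar>F x\<bar> \<le> M) \<Longrightarrow> - M \<le> P F"
  using P_ge Pset_lb by metis

lemma P_le_elem: "F \<in> Bd \<Longrightarrow> g \<in> Cb \<Longrightarrow> valid ts \<Longrightarrow> (\<And>x. F x + usum ts x \<le> g x) \<Longrightarrow> P F \<le> L g - wsum ts"
  using P_le PsetI by metis

lemma Pset_add: assumes "e1 \<in> Pset F1" "e2 \<in> Pset F2" shows "e1 + e2 \<in> Pset (\<lambda>x. F1 x + F2 x)"
proof -
  obtain g1 ts1 where e1: "e1 = L g1 - wsum ts1" "g1 \<in> Cb" "valid ts1" "\<And>x. F1 x + usum ts1 x \<le> g1 x"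
    using assms(1) unfolding Pset_def by blast
  obtain g2 ts2 where e2: "e2 = L g2 - wsum ts2" "g2 \<in> Cb" "valid ts2" "\<And>x. F2 x + usum ts2 x \<le> g2 x"
    using assms(2) unfolding Pset_def by blast
  have "L (\<lambda>x. g1 x + g2 x) - wsum (ts1 @ ts2) \<in> Pset (\<lambda>x. F1 x + F2 x)"
  proof (rule PsetI)
    show "(\<lambda>x. g1 x + g2 x) \<in> Cb" using e1(2) e2(2) by (rule Cb_add)
    show "valid (ts1 @ ts2)" using e1(3) e2(3) by (rule valid_append)
    fix x show "F1 x + F2 x + usum (ts1 @ ts2) x \<le> g1 x + g2 x"
      using e1(4)[of x] e2(4)[of x] by (simp add: usum_append)
  qed
  moreover have "e1 + e2 = L (\<lambda>x. g1 x + g2 x) - wsum (ts1 @ ts2)"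
    using e1(1) e2(1) Ladd[OF e1(2) e2(2)] by (simp add: wsum_append)
  ultimately show ?thesis by (simp only:)
qed

lemma Pset_scale: assumes "a > 0" "e \<in> Pset F" shows "a * e \<in> Pset (\<lambda>x. a * F x)"
proof -
  obtain g ts where e: "e = L g - wsum ts" "g \<in> Cb" "valid ts" "\<And>x. F x + usum ts x \<le> g x"
    using assms(2) unfolding Pset_def by blast
  have "L (\<lambda>x. a * g x) - wsum (map (\<lambda>p. (a * fst p, snd p)) ts) \<in> Pset (\<lambda>x. a * F x)"
  proof (rule PsetI)
    show "(\<lambda>x. a * g x) \<in> Cb" using e(2) by (rule Cb_scale)
    show "valid (map (\<lambda>p. (a * fst p, snd p)) ts)" using assms(1) e(3) by (simp add: valid_scale)
    fix x
    have "a * (F x + usum ts x) \<le> a * g x" using e(4)[of x] assms(1) by (simp add: mult_left_mono)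
    then show "a * F x + usum (map (\<lambda>p. (a * fst p, snd p)) ts) x \<le> a * g x"
      by (simp add: usum_scale algebra_simps)
  qed
  moreover have "a * e = L (\<lambda>x. a * g x) - wsum (map (\<lambda>p. (a * fst p, snd p)) ts)"
    using e(1) Lsc[OF e(2), of a] by (simp add: wsum_scale right_diff_distrib)
  ultimately show ?thesis by (simp only:)
qed

lemma P_sublin: "sublin Bd P"
proof -
  have add: "P (\<lambda>x. F1 x + F2 x) \<le> P F1 + P F2" if F: "F1 \<in> Bd" "F2 \<in> Bd" for F1 F2
  proof -
    have F12: "(\<lambda>x. F1 x + F2 x) \<in> Bd" using Bd_add[OF F] .
    have "P (\<lambda>x. F1 x + F2 x) - P F2 \<le> P F1"
    proof (rule P_ge[OF F(1)])
      fix e1 assume e1: "e1 \<in> Pset F1"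
      have "P (\<lambda>x. F1 x + F2 x) - e1 \<le> P F2"
      proof (rule P_ge[OF F(2)])
        fix e2 assume e2: "e2 \<in> Pset F2"
        show "P (\<lambda>x. F1 x + F2 x) - e1 \<le> e2" using P_le[OF F12 Pset_add[OF e1 e2]] by simp
      qed
      then show "P (\<lambda>x. F1 x + F2 x) - P F2 \<le> e1" by simp
    qed
    then show ?thesis by simp
  qed
  have scle: "P (\<lambda>x. a * F x) \<le> a * P F" if F: "F \<in> Bd" and a: "a > 0" for F a
  proof -
    have aF: "(\<lambda>x. a * F x) \<in> Bd" using Bd_scale[OF F] .
    have "P (\<lambda>x. a * F x) / a \<le> P F"
    proof (rule P_ge[OF F])
      fix e assume "e \<in> Pset F"
      then have "P (\<lambda>x. a * F x) \<le> a * e" using P_le[OF aF Pset_scale[OF a]] by blast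
      then show "P (\<lambda>x. a * F x) / a \<le> e" using a by (simp add: divide_le_eq mult.commute)
    qed
    then show ?thesis using a by (simp add: divide_le_eq mult.commute)
  qed
  have hom: "P (\<lambda>x. a * F x) = a * P F" if F: "F \<in> Bd" and a: "a \<ge> 0" for F a
  proof (cases "a = 0")
    case True
    have "P (\<lambda>x. 0) \<le> L (\<lambda>x. 0) - wsum []" by (rule P_le_elem) (auto simp: Bd_zero)
    moreover have "- 0 \<le> P (\<lambda>x. 0)" by (rule P_lb) (auto simp: Bd_zero)
    ultimately show ?thesis using True L_const[of 0] by simp
  next
    case False
    then have a0: "a > 0" using a by simp
    have aF: "(\<lambda>x. a * F x) \<in> Bd" using Bd_scale[OF F] .
    have "P (\<lambda>x. (1/a) * (a * F x)) \<le> (1/a) * P (\<lambda>x. a * F x)" using scle[OF aF, of "1/a"] a0 by simp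
    moreover have "(\<lambda>x. (1/a) * (a * F x)) = F" using a0 by simp
    ultimately have "P F \<le> (1/a) * P (\<lambda>x. a * F x)" by simp
    then have "a * P F \<le> P (\<lambda>x. a * F x)" using a0 by (simp add: field_simps)
    then show ?thesis using scle[OF F a0] by simp
  qed
  show ?thesis unfolding sublin_def using add hom by simp
qed

lemma hb_Bd: "hb_setting Bd P"
  by unfold_locales (auto simp: Bd_zero Bd_add Bd_scale P_sublin)

end

context pos_lin begin

lemma ext_exists: "\<exists>Lt. (\<forall>f\<in>Bd. \<forall>g\<in>Bd. Lt (\<lambda>x. f x + g x) = Lt f + Lt g) \<and> (\<forall>f\<in>Bd. \<forall>a. Lt (\<lambda>x. a * f x) = a * Lt f)
      \<and> (\<forall>f\<in>Bd. Lt f \<le> P f)"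
  using hb_setting.hahn_banach[OF hb_Bd] .

theorem representation: "\<exists>\<gamma>\<in>M1. \<forall>F\<in>Cb. fa_integral \<gamma> F = L F"
proof -
  obtain Lt where Ltadd: "\<And>f g. f\<in>Bd \<Longrightarrow> g\<in>Bd \<Longrightarrow> Lt (\<lambda>x. f x + g x) = Lt f + Lt g"
    and Ltsc: "\<And>f a. f\<in>Bd \<Longrightarrow> Lt (\<lambda>x. a * f x) = a * Lt f"
    and LtP: "\<And>f. f\<in>Bd \<Longrightarrow> Lt f \<le> P f"
    using ext_exists by blast
  have Lt_diff: "Lt (\<lambda>x. f x - g x) = Lt f - Lt g" if "f \<in> Bd" "g \<in> Bd" for f g
    using Ltadd[OF that(1) Bd_scale[OF that(2), of "-1"]] Ltsc[OF that(2), of "-1"] by simp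
  have Lt_nonpos: "Lt F \<le> 0" if "F \<in> Bd" "\<And>x. F x \<le> 0" for F
  proof -
    have "P F \<le> L (\<lambda>x. 0) - wsum []" by (rule P_le_elem) (use that in auto)
    then show ?thesis using LtP[OF that(1)] L_const by simp
  qed
  have Lt_mono: "Lt F \<le> Lt G" if "F \<in> Bd" "G \<in> Bd" "\<And>x. F x \<le> G x" for F G
    using Lt_nonpos[of "\<lambda>x. F x - G x"] Lt_diff[OF that(1,2)] Bd_add[OF that(1) Bd_scale[OF that(2), of "-1"]] that(3)
    by simp
  have Lt_Cb: "Lt g = L g" if g: "g \<in> Cb" for g
  proof -
    have gB: "g \<in> Bd" using Cb_Bd[OF g] .
    have "P g \<le> L g - wsum []" by (rule P_le_elem) (use g gB in auto)
    then have le: "Lt g \<le> L g" using LtP[OF gB] by simp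
    have mg: "(\<lambda>x. (-1) * g x) \<in> Cb" using Cb_scale[OF g] .
    have "P (\<lambda>x. (-1) * g x) \<le> L (\<lambda>x. (-1) * g x) - wsum []"
      by (rule P_le_elem) (use mg Cb_Bd[OF mg] in auto)
    then have "Lt (\<lambda>x. (-1) * g x) \<le> L (\<lambda>x. (-1) * g x)" using LtP[OF Cb_Bd[OF mg]] by simp
    then have "- Lt g \<le> - L g" using Ltsc[OF gB, of "-1"] Lsc[OF g, of "-1"] by simp
    then show ?thesis using le by simp
  qed
  have Lt_const: "Lt (\<lambda>x. c) = c" for c using Lt_Cb[OF Cb_const] L_const by simp
  have Lt_zs: "gamma0 Z \<le> Lt (indicator Z)" if Z: "Z \<in> zero_sets" for Z
  proof -
    have mZ: "(\<lambda>x. (-1) * indicator Z x) \<in> Bd" using Bd_scale[OF Bd_indicator] .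
    have "P (\<lambda>x. (-1) * indicator Z x) \<le> L (\<lambda>x. 0) - wsum [(1, Z)]"
      by (rule P_le_elem) (use mZ Z in auto)
    then have "Lt (\<lambda>x. (-1) * indicator Z x) \<le> - gamma0 Z" using LtP[OF mZ] L_const by simp
    then show ?thesis using Ltsc[OF Bd_indicator, of "-1" Z] by simp
  qed
  define \<gamma> where "\<gamma> A = Lt (indicator A)" for A
  have g_nonneg: "0 \<le> \<gamma> A" for A
    using Lt_mono[OF Bd_zero Bd_indicator, of A] Lt_const[of 0] by (simp add: \<gamma>_def)
  have g_add: "\<gamma> (A \<union> B) = \<gamma> A + \<gamma> B" if "A \<inter> B = {}" for A B
  proof -
    have "indicator (A \<union> B) = (\<lambda>x. indicator A x + indicator B x :: real)"
      using indicator_disj_union[OF that] by auto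
    then show ?thesis unfolding \<gamma>_def using Ltadd[OF Bd_indicator Bd_indicator] by simp
  qed
  have g_mono: "\<gamma> A \<le> \<gamma> B" if "A \<subseteq> B" for A B
    unfolding \<gamma>_def using that by (intro Lt_mono Bd_indicator) (auto simp: indicator_def)
  have g_sub: "\<gamma> C \<le> \<gamma> A + \<gamma> B" if "C \<subseteq> A \<union> B" for A B C
  proof -
    have "\<gamma> C \<le> Lt (\<lambda>x. indicator A x + indicator B x)"
      unfolding \<gamma>_def using that by (intro Lt_mono Bd_indicator Bd_add) (auto simp: indicator_def)
    then show ?thesis unfolding \<gamma>_def using Ltadd[OF Bd_indicator Bd_indicator] by simp
  qed
  have g_UNIV: "\<gamma> UNIV = 1" unfolding \<gamma>_def using Lt_const[of 1] by simp
  define R where "R = {A. \<forall>e>0. \<exists>F U. F \<in> zero_sets \<and> - U \<in> zero_sets \<and> F \<subseteq> A \<and> A \<subseteq> U \<and> \<gamma> (U - F) < e}"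
  have zalg_R: "A \<in> R" if "A \<in> zalg" for A
    using that
  proof (induction rule: zalg.induct)
    case (zalg_zero Z)
    show ?case unfolding R_def mem_Collect_eq
    proof (intro allI impI)
      fix e :: real assume e: "e > 0"
      obtain g where g: "g \<in> Cb" "\<And>x. indicator Z x \<le> g x" "L g < gamma0 Z + e/3"
        using gamma0_less[of Z "gamma0 Z + e/3"] e by auto
      define g' where "g' x = min (g x) 1" for x
      have g': "g' \<in> Cb" unfolding g'_def using Cb_min[OF g(1) Cb_const] .
      have g'ge: "indicator Z x \<le> g' x" for x using g(2)[of x] by (simp add: g'_def indicator_def)
      have g'le1: "g' x \<le> 1" for x by (simp add: g'_def)
      have Lg'1: "L g' \<le> 1" using L_mono[OF g' Cb_const g'le1] L_const by simp
      have Lg'g: "L g' \<le> L g" using L_mono[OF g' g(1)] by (simp add: g'_def)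
      define \<eta> where "\<eta> = e / 3"
      have eta: "\<eta> > 0" using e by (simp add: \<eta>_def)
      define U where "U = {x. 1 < (1 + \<eta>) * g' x}"
      have cU: "- U \<in> zero_sets"
      proof -
        have "- U = {x. (1 + \<eta>) * g' x \<le> 1}" unfolding U_def by auto
        then show ?thesis using zero_sets_le[OF Cb_scale[OF g']] by simp
      qed
      have ZU: "Z \<subseteq> U"
      proof
        fix x assume "x \<in> Z"
        then have "g' x = 1" using g'ge[of x] g'le1[of x] by (simp add: indicator_def)
        then show "x \<in> U" using eta by (simp add: U_def)
      qed
      have indU: "indicator U x \<le> (1 + \<eta>) * g' x" for x
      proof (cases "x \<in> U")
        case True then show ?thesis by (simp add: U_def)
      next
        case False
        have "0 \<le> g' x" using g'ge[of x] by (meson indicator_pos_le order_trans)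
        then show ?thesis using False eta by simp
      qed
      have "\<gamma> U \<le> Lt (\<lambda>x. (1 + \<eta>) * g' x)"
        unfolding \<gamma>_def by (rule Lt_mono[OF Bd_indicator Bd_scale[OF Cb_Bd[OF g']] indU])
      also have "\<dots> = (1 + \<eta>) * L g'" using Ltsc[OF Cb_Bd[OF g']] Lt_Cb[OF g'] by simp
      finally have gU: "\<gamma> U \<le> (1 + \<eta>) * L g'" .
      have split: "\<gamma> U = \<gamma> (U - Z) + \<gamma> Z"
      proof -
        have "(U - Z) \<union> Z = U" using ZU by blast
        moreover have "(U - Z) \<inter> Z = {}" by blast
        ultimately show ?thesis using g_add[of "U - Z" Z] by simp
      qed
      have "\<gamma> Z \<ge> gamma0 Z" using Lt_zs[OF zalg_zero] by (simp add: \<gamma>_def)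
      then have "\<gamma> (U - Z) < (1 + \<eta>) * L g' - L g' + e/3" using gU split g(3) Lg'g by linarith
      also have "\<dots> = \<eta> * L g' + e/3" by (simp add: algebra_simps)
      also have "\<dots> \<le> \<eta> + e/3" using Lg'1 eta by (simp add: mult_left_le)
      also have "\<dots> < e" using e by (simp add: \<eta>_def)
      finally show "\<exists>F U. F \<in> zero_sets \<and> - U \<in> zero_sets \<and> F \<subseteq> Z \<and> Z \<subseteq> U \<and> \<gamma> (U - F) < e"
        using zalg_zero cU ZU by blast
    qed
  next
    case (zalg_compl A)
    show ?case unfolding R_def mem_Collect_eq
    proof (intro allI impI)
      fix e :: real assume e: "e > 0"
      then obtain F U where FU: "F \<in> zero_sets" "- U \<in> zero_sets" "F \<subseteq> A" "A \<subseteq> U" "\<gamma> (U - F) < e"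
        using zalg_compl.IH unfolding R_def by blast
      have "-F - -U = U - F" by blast
      then show "\<exists>F' U'. F' \<in> zero_sets \<and> - U' \<in> zero_sets \<and> F' \<subseteq> -A \<and> -A \<subseteq> U' \<and> \<gamma> (U' - F') < e"
        using FU by (intro exI[where x="-U"] exI[where x="-F"]) auto
    qed
  next
    case (zalg_union A B)
    show ?case unfolding R_def mem_Collect_eq
    proof (intro allI impI)
      fix e :: real assume e: "e > 0"
      obtain F1 U1 where FU1: "F1 \<in> zero_sets" "- U1 \<in> zero_sets" "F1 \<subseteq> A" "A \<subseteq> U1" "\<gamma> (U1 - F1) < e/2"
      proof -
        have "e/2 > 0" using e by simp
        then show ?thesis using zalg_union.IH(1) that unfolding R_def mem_Collect_eq by blast
      qed
      obtain F2 U2 where FU2: "F2 \<in> zero_sets" "- U2 \<in> zero_sets" "F2 \<subseteq> B" "B \<subseteq> U2" "\<gamma> (U2 - F2) < e/2"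
      proof -
        have "e/2 > 0" using e by simp
        then show ?thesis using zalg_union.IH(2) that unfolding R_def mem_Collect_eq by blast
      qed
      have "\<gamma> ((U1 \<union> U2) - (F1 \<union> F2)) \<le> \<gamma> (U1 - F1) + \<gamma> (U2 - F2)" by (rule g_sub) blast
      moreover have "- (U1 \<union> U2) \<in> zero_sets" using zero_sets_Int[OF FU1(2) FU2(2)] by simp
      moreover have "F1 \<union> F2 \<in> zero_sets" using zero_sets_Un[OF FU1(1) FU2(1)] .
      ultimately show "\<exists>F U. F \<in> zero_sets \<and> - U \<in> zero_sets \<and> F \<subseteq> A \<union> B \<and> A \<union> B \<subseteq> U \<and> \<gamma> (U - F) < e"
        using FU1 FU2 by (intro exI[where x="F1 \<union> F2"] exI[where x="U1 \<union> U2"]) auto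
    qed
  qed
  have M1: "\<gamma> \<in> M1"
  proof -
    have "\<exists>F\<in>zero_sets. F \<subseteq> A \<and> \<gamma> (A - F) < e" if A: "A \<in> zalg" and e: "e > 0" for A e
    proof -
      obtain F U where FU: "F \<in> zero_sets" "- U \<in> zero_sets" "F \<subseteq> A" "A \<subseteq> U" "\<gamma> (U - F) < e"
        using zalg_R[OF A] e unfolding R_def by blast
      have "\<gamma> (A - F) \<le> \<gamma> (U - F)" using FU by (intro g_mono) blast
      then have "\<gamma> (A - F) < e" using FU(5) by linarith
      then show ?thesis using FU(1,3) by blast
    qed
    then show ?thesis unfolding M1_def mem_Collect_eq
      by (intro conjI ballI allI impI g_nonneg g_add g_UNIV) auto
  qed
  have simple: "(\<Sum>p\<leftarrow>s. fst p * \<gamma> (snd p)) = Lt (\<lambda>x. \<Sum>p\<leftarrow>s. fst p * indicator (snd p) x)" for s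
  proof (induction s)
    case Nil then show ?case using Lt_const[of 0] by simp
  next
    case (Cons p s)
    have "Lt (\<lambda>x. \<Sum>p\<leftarrow>p # s. fst p * indicator (snd p) x)
        = Lt (\<lambda>x. fst p * indicator (snd p) x + (\<Sum>p\<leftarrow>s. fst p * indicator (snd p) x))" by simp
    also have "\<dots> = fst p * \<gamma> (snd p) + Lt (\<lambda>x. \<Sum>p\<leftarrow>s. fst p * indicator (snd p) x)"
      using Ltadd[OF Bd_scale[OF Bd_indicator] Bd_simple] Ltsc[OF Bd_indicator] by (simp add: \<gamma>_def)
    finally show ?case using Cons.IH by simp
  qed
  have close: "\<bar>Lt F - Lt G\<bar> \<le> e" if "F \<in> Bd" "G \<in> Bd" "\<And>x. \<bar>F x - G x\<bar> \<le> e" for F G e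
  proof -
    have "Lt (\<lambda>x. F x - G x) \<le> Lt (\<lambda>x. e)"
      using that Bd_add[OF that(1) Bd_scale[OF that(2), of "-1"]]
      by (intro Lt_mono) (auto simp: abs_le_iff intro: Cb_Bd)
    moreover have "Lt (\<lambda>x. G x - F x) \<le> Lt (\<lambda>x. e)"
      using that Bd_add[OF that(2) Bd_scale[OF that(1), of "-1"]]
      by (intro Lt_mono) (auto simp: abs_le_iff intro: Cb_Bd)
    ultimately show ?thesis using Lt_diff[OF that(1,2)] Lt_diff[OF that(2,1)] Lt_const by (simp add: abs_le_iff)
  qed
  have simple: "(\<Sum>p\<leftarrow>s. fst p * \<gamma> (snd p)) = Lt (\<lambda>x. \<Sum>p\<leftarrow>s. fst p * indicator (snd p) x)" for s
  proof (induction s)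
    case Nil then show ?case using Lt_const[of 0] by simp
  next
    case (Cons p s)
    have "Lt (\<lambda>x. \<Sum>p\<leftarrow>p # s. fst p * indicator (snd p) x)
        = Lt (\<lambda>x. fst p * indicator (snd p) x + (\<Sum>p\<leftarrow>s. fst p * indicator (snd p) x))" by simp
    also have "\<dots> = fst p * \<gamma> (snd p) + Lt (\<lambda>x. \<Sum>p\<leftarrow>s. fst p * indicator (snd p) x)"
      using Ltadd[OF Bd_scale[OF Bd_indicator] Bd_simple] Ltsc[OF Bd_indicator] by (simp add: \<gamma>_def)
    finally show ?case using Cons.IH by simp
  qed
  have close: "\<bar>Lt F - Lt G\<bar> \<le> e" if "F \<in> Bd" "G \<in> Bd" "\<And>x. \<bar>F x - G x\<bar> \<le> e" for F G e
  proof -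
    have "Lt (\<lambda>x. F x - G x) \<le> Lt (\<lambda>x. e)"
      using that Bd_add[OF that(1) Bd_scale[OF that(2), of "-1"]]
      by (intro Lt_mono) (auto simp: abs_le_iff intro: Cb_Bd)
    moreover have "Lt (\<lambda>x. G x - F x) \<le> Lt (\<lambda>x. e)"
      using that Bd_add[OF that(2) Bd_scale[OF that(1), of "-1"]]
      by (intro Lt_mono) (auto simp: abs_le_iff intro: Cb_Bd)
    ultimately show ?thesis using Lt_diff[OF that(1,2)] Lt_diff[OF that(2,1)] Lt_const by (simp add: abs_le_iff)
  qed
  have "fa_integral \<gamma> F = L F" if F: "F \<in> Cb" for F
  proof -
    let ?P = "\<lambda>r. \<forall>e>0. \<exists>s :: (real \<times> 'z set) list. (\<forall>p\<in>set s. snd p \<in> zalg)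
      \<and> (\<forall>x. \<bar>F x - (\<Sum>p\<leftarrow>s. fst p * indicator (snd p) x)\<bar> \<le> e)
      \<and> \<bar>r - (\<Sum>p\<leftarrow>s. fst p * \<gamma> (snd p))\<bar> \<le> e"
    have FB: "F \<in> Bd" using Cb_Bd[OF F] .
    have "?P (L F)"
    proof (intro allI impI)
      fix e :: real assume e: "e > 0"
      obtain s :: "(real \<times> 'z set) list" where s: "\<forall>p\<in>set s. snd p \<in> zalg"
        "\<forall>x. \<bar>F x - (\<Sum>p\<leftarrow>s. fst p * indicator (snd p) x)\<bar> \<le> e"
        using Cb_simple_approx[OF F e] by blast
      have "\<bar>Lt F - Lt (\<lambda>x. \<Sum>p\<leftarrow>s. fst p * indicator (snd p) x)\<bar> \<le> e"
        using close[OF FB Bd_simple] s(2) by blast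
      then have "\<bar>L F - (\<Sum>p\<leftarrow>s. fst p * \<gamma> (snd p))\<bar> \<le> e" using Lt_Cb[OF F] simple by simp
      then show "\<exists>s :: (real \<times> 'z set) list. (\<forall>p\<in>set s. snd p \<in> zalg)
      \<and> (\<forall>x. \<bar>F x - (\<Sum>p\<leftarrow>s. fst p * indicator (snd p) x)\<bar> \<le> e)
      \<and> \<bar>L F - (\<Sum>p\<leftarrow>s. fst p * \<gamma> (snd p))\<bar> \<le> e" using s by blast
    qed
    moreover have "r = L F" if r: "?P r" for r
    proof -
      have *: "\<bar>r - L F\<bar> \<le> e" if e: "e > 0" for e
      proof -
        have e2: "e/2 > 0" using e by simp
        obtain s :: "(real \<times> 'z set) list" where s: "(\<forall>p\<in>set s. snd p \<in> zalg)
          \<and> (\<forall>x. \<bar>F x - (\<Sum>p\<leftarrow>s. fst p * indicator (snd p) x)\<bar> \<le> e/2)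
          \<and> \<bar>r - (\<Sum>p\<leftarrow>s. fst p * \<gamma> (snd p))\<bar> \<le> e/2"
          using r[rule_format, OF e2] ..
        have "\<bar>Lt F - Lt (\<lambda>x. \<Sum>p\<leftarrow>s. fst p * indicator (snd p) x)\<bar> \<le> e/2"
          using close[OF FB Bd_simple] s by blast
        then have a: "\<bar>L F - Lt (\<lambda>x. \<Sum>p\<leftarrow>s. fst p * indicator (snd p) x)\<bar> \<le> e/2" using Lt_Cb[OF F] by simp
        have b: "\<bar>r - Lt (\<lambda>x. \<Sum>p\<leftarrow>s. fst p * indicator (snd p) x)\<bar> \<le> e/2" using s simple by simp
        show ?thesis using abs_le_D1[OF a] abs_le_D2[OF a] abs_le_D1[OF b] abs_le_D2[OF b] by linarith
      qed
      have "\<bar>r - L F\<bar> \<le> 0"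
      proof (rule field_le_epsilon)
        fix e :: real assume "0 < e" then show "\<bar>r - L F\<bar> \<le> 0 + e" using * by simp
      qed
      then show ?thesis by simp
    qed
    ultimately show ?thesis unfolding fa_integral_def by (rule the_equality)
  qed
  then show ?thesis using M1 by blast
qed

end

lemma baire_Cb_meas:
  assumes "baire_prob \<mu>" "f \<in> Cb" shows "f \<in> borel_measurable \<mu>"
proof (rule borel_measurableI_le)
  fix y
  have "{x. f x \<le> y} \<in> zero_sets" using zero_sets_le[OF assms(2)] .
  then have "{x. f x \<le> y} \<in> baire_sets" unfolding baire_sets_def by (rule sigma_sets.Basic)
  then show "{x \<in> space \<mu>. f x \<le> y} \<in> sets \<mu>" using assms(1) unfolding baire_prob_def by simp
qed

lemma baire_Cb_int:
  assumes "baire_prob \<mu>" "f \<in> Cb" shows "integrable \<mu> f"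
proof -
  interpret prob_space \<mu> using assms(1) unfolding baire_prob_def by simp
  obtain B where "\<And>x. \<bar>f x\<bar> \<le> B" using Cb_bound[OF assms(2)] by metis
  then show ?thesis by (intro integrable_const_bound[where B=B] baire_Cb_meas[OF assms]) auto
qed

lemma baire_int_const: assumes "baire_prob \<mu>" shows "integral\<^sup>L \<mu> (\<lambda>x. c) = (c::real)"
proof -
  interpret prob_space \<mu> using assms(1) unfolding baire_prob_def by simp
  show ?thesis using prob_space by simp
qed

lemma baire_int_ge:
  assumes "baire_prob \<mu>" "f \<in> Cb" "\<And>x. c \<le> f x" shows "c \<le> integral\<^sup>L \<mu> f"
proof -
  have "integral\<^sup>L \<mu> (\<lambda>x. c) \<le> integral\<^sup>L \<mu> f"
    using assms by (intro Bochner_Integration.integral_mono baire_Cb_int Cb_const) auto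
  then show ?thesis unfolding baire_int_const[OF assms(1)] .
qed

lemma baire_int_add:
  assumes "baire_prob \<mu>" "f \<in> Cb" "g \<in> Cb" shows "integral\<^sup>L \<mu> (\<lambda>x. f x + g x) = integral\<^sup>L \<mu> f + integral\<^sup>L \<mu> g"
  by (rule Bochner_Integration.integral_add) (use baire_Cb_int[OF assms(1)] assms in auto)

lemma oplus_apply: "oplus \<phi> \<psi> z = \<phi> (fst z) + \<psi> (snd z)"
  by (cases z) (simp add: oplus_def)

lemma oplus_Cb:
  assumes "\<phi> \<in> Cb" "\<psi> \<in> Cb" shows "oplus \<phi> \<psi> \<in> Cb"
proof -
  obtain A B where AB: "\<And>x. \<bar>\<phi> x\<bar> \<le> A" "\<And>y. \<bar>\<psi> y\<bar> \<le> B" using assms Cb_bound by metis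
  have c1: "continuous_on UNIV (\<lambda>z. \<phi> (fst z))"
    using continuous_on_compose2[OF Cb_cont[OF assms(1)] continuous_on_fst[OF continuous_on_id]] by simp
  have c2: "continuous_on UNIV (\<lambda>z. \<psi> (snd z))"
    using continuous_on_compose2[OF Cb_cont[OF assms(2)] continuous_on_snd[OF continuous_on_id]] by simp
  have "oplus \<phi> \<psi> = (\<lambda>z. \<phi> (fst z) + \<psi> (snd z))" by (rule ext) (simp add: oplus_apply)
  moreover have "\<bar>\<phi> (fst z) + \<psi> (snd z)\<bar> \<le> A + B" for z
    using AB(1)[of "fst z"] AB(2)[of "snd z"] by linarith
  ultimately show ?thesis using c1 c2 by (auto intro!: CbI[where B="A+B"] continuous_on_add)
qed

lemma int_pair_lb:
  assumes mu: "baire_prob \<mu>" and nu: "baire_prob \<nu>" and phi: "\<phi> \<in> Cb" and psi: "\<psi> \<in> Cb"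
    and ge: "\<And>x y. c \<le> \<phi> x + \<psi> y"
  shows "c \<le> integral\<^sup>L \<mu> \<phi> + integral\<^sup>L \<nu> \<psi>"
proof -
  obtain B where B: "\<And>y. \<bar>\<psi> y\<bar> \<le> B" using Cb_bound[OF psi] by metis
  define m where "m = Inf (range \<psi>)"
  have bdd: "bdd_below (range \<psi>)"
  proof (rule bdd_belowI[where m="-B"])
    fix v assume "v \<in> range \<psi>"
    then obtain y where "v = \<psi> y" by blast
    then show "- B \<le> v" using abs_le_D2[OF B[of y]] by simp
  qed
  have m_le: "m \<le> \<psi> y" for y unfolding m_def using bdd by (simp add: cInf_lower)
  have "c - \<phi> x \<le> m" for x unfolding m_def using ge[of x] by (intro cInf_greatest) (auto simp: algebra_simps)
  then have "c - m \<le> integral\<^sup>L \<mu> \<phi>" using baire_int_ge[OF mu phi, of "c - m"] by (simp add: algebra_simps)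
  moreover have "m \<le> integral\<^sup>L \<nu> \<psi>" using baire_int_ge[OF nu psi] m_le by simp
  ultimately show ?thesis by simp
qed

lemma ereal_convex_le:
  assumes "ereal a \<le> C" "ereal b \<le> C" "t1 \<ge> 0" "t2 \<ge> 0" "t1 + t2 > 0"
  shows "ereal ((t1 * a + t2 * b) / (t1 + t2)) \<le> C"
proof -
  have "t1 * a + t2 * b \<le> t1 * max a b + t2 * max a b"
    using assms(3,4) by (intro add_mono mult_left_mono) auto
  then have "(t1 * a + t2 * b) / (t1 + t2) \<le> max a b"
    using assms(5) by (simp add: divide_le_eq algebra_simps)
  moreover have "ereal (max a b) \<le> C" using assms(1,2) by (simp add: max_def)
  ultimately show ?thesis by (meson ereal_less_eq(3) order_trans)
qed

locale ot_setting =
  fixes \<mu> :: "'a::topological_space measure" and \<nu> :: "'b::topological_space measure"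
    and c :: "'a \<times> 'b \<Rightarrow> ereal" and V :: real and b :: real
  assumes mu: "baire_prob \<mu>" and nu: "baire_prob \<nu>"
    and cb: "\<And>z. ereal b \<le> c z"
    and Vb: "\<And>\<phi> \<psi>. DP_admissible c \<phi> \<psi> \<Longrightarrow> integral\<^sup>L \<mu> \<phi> + integral\<^sup>L \<nu> \<psi> \<le> V"
begin

definition Qset :: "('a \<times> 'b \<Rightarrow> real) \<Rightarrow> real set" where
  "Qset F = {integral\<^sup>L \<mu> \<phi> + integral\<^sup>L \<nu> \<psi> + t * V | \<phi> \<psi> t f. \<phi> \<in> Cb \<and> \<psi> \<in> Cb \<and> 0 \<le> t \<and> f \<in> Cb
      \<and> (\<forall>z. ereal (f z) \<le> c z) \<and> (\<forall>z. F z \<le> oplus \<phi> \<psi> z + t * f z)}"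

definition pp :: "('a \<times> 'b \<Rightarrow> real) \<Rightarrow> real" where "pp F = Inf (Qset F)"

lemma QsetI: "\<phi> \<in> Cb \<Longrightarrow> \<psi> \<in> Cb \<Longrightarrow> 0 \<le> t \<Longrightarrow> f \<in> Cb \<Longrightarrow> (\<And>z. ereal (f z) \<le> c z)
   \<Longrightarrow> (\<And>z. F z \<le> oplus \<phi> \<psi> z + t * f z) \<Longrightarrow> integral\<^sup>L \<mu> \<phi> + integral\<^sup>L \<nu> \<psi> + t * V \<in> Qset F"
  unfolding Qset_def by blast

lemma QsetE:
  assumes "e \<in> Qset F"
  obtains \<phi> \<psi> t f where "e = integral\<^sup>L \<mu> \<phi> + integral\<^sup>L \<nu> \<psi> + t * V" "\<phi> \<in> Cb" "\<psi> \<in> Cb" "0 \<le> t" "f \<in> Cb"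
    "\<And>z. ereal (f z) \<le> c z" "\<And>z. F z \<le> oplus \<phi> \<psi> z + t * f z"
  using assms unfolding Qset_def by blast

lemma Qset_ne: assumes "F \<in> Cb" shows "Qset F \<noteq> {}"
proof -
  obtain M where M: "\<And>z. \<bar>F z\<bar> \<le> M" using Cb_bound[OF assms] by metis
  have "integral\<^sup>L \<mu> (\<lambda>x. M) + integral\<^sup>L \<nu> (\<lambda>y. 0) + 0 * V \<in> Qset F"
    by (rule QsetI[where f="\<lambda>z. b"], rule Cb_const, rule Cb_const, simp, rule Cb_const) (use cb M in \<open>auto simp: oplus_apply abs_le_iff\<close>)
  then show ?thesis by blast
qed

lemma Qset_lb: assumes M: "\<And>z. \<bar>F z\<bar> \<le> M" and e: "e \<in> Qset F" shows "- M \<le> e"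
proof -
  obtain \<phi> \<psi> t f where e: "e = integral\<^sup>L \<mu> \<phi> + integral\<^sup>L \<nu> \<psi> + t * V" and phi: "\<phi> \<in> Cb" and psi: "\<psi> \<in> Cb"
    and t: "0 \<le> t" and f: "f \<in> Cb" and fc: "\<And>z. ereal (f z) \<le> c z" and Fle: "\<And>z. F z \<le> oplus \<phi> \<psi> z + t * f z"
    using QsetE[OF e] by metis
  have Mge: "- M \<le> F z" for z using abs_le_D2[OF M[of z]] by simp
  show ?thesis
  proof (cases "t = 0")
    case True
    have "- M \<le> \<phi> x + \<psi> y" for x y using Mge[of "(x,y)"] Fle[of "(x,y)"] True by (simp add: oplus_apply)
    then have "- M \<le> integral\<^sup>L \<mu> \<phi> + integral\<^sup>L \<nu> \<psi>" by (rule int_pair_lb[OF mu nu phi psi])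
    then show ?thesis using e True by simp
  next
    case False
    then have t0: "t > 0" using t by simp
    define \<phi>' where "\<phi>' x = (-1/t) * (\<phi> x + M)" for x
    define \<psi>' where "\<psi>' y = (-1/t) * \<psi> y" for y
    have phi': "\<phi>' \<in> Cb" unfolding \<phi>'_def using phi by (intro Cb_scale Cb_add Cb_const)
    have psi': "\<psi>' \<in> Cb" unfolding \<psi>'_def using psi by (intro Cb_scale)
    have "oplus \<phi>' \<psi>' z \<le> f z" for z
    proof -
      have "- M - \<phi> (fst z) - \<psi> (snd z) \<le> t * f z" using Mge[of z] Fle[of z] by (simp add: oplus_apply)
      then have "(- M - \<phi> (fst z) - \<psi> (snd z)) / t \<le> f z" using t0 by (simp add: divide_le_eq mult.commute)
      moreover have "oplus \<phi>' \<psi>' z = (- M - \<phi> (fst z) - \<psi> (snd z)) / t"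
        using t0 by (simp add: oplus_apply \<phi>'_def \<psi>'_def field_simps)
      ultimately show ?thesis by simp
    qed
    then have "ereal (oplus \<phi>' \<psi>' z) \<le> c z" for z using fc[of z] by (meson ereal_less_eq(3) order_trans)
    then have "DP_admissible c \<phi>' \<psi>'" unfolding DP_admissible_def using phi' psi' by blast
    then have le: "integral\<^sup>L \<mu> \<phi>' + integral\<^sup>L \<nu> \<psi>' \<le> V" by (rule Vb)
    have i1: "integral\<^sup>L \<mu> \<phi>' = (-1/t) * (integral\<^sup>L \<mu> \<phi> + M)"
      unfolding \<phi>'_def using baire_int_add[OF mu phi Cb_const] baire_int_const[OF mu] by simp
    have i2: "integral\<^sup>L \<nu> \<psi>' = (-1/t) * integral\<^sup>L \<nu> \<psi>" unfolding \<psi>'_def by simp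
    have X: "(-1/t) * (integral\<^sup>L \<mu> \<phi> + M + integral\<^sup>L \<nu> \<psi>) \<le> V" using le i1 i2 by (simp add: algebra_simps)
    have "t * ((-1/t) * (integral\<^sup>L \<mu> \<phi> + M + integral\<^sup>L \<nu> \<psi>)) \<le> t * V"
      by (rule mult_left_mono[OF X]) (use t0 in simp)
    moreover have "t * ((-1/t) * (integral\<^sup>L \<mu> \<phi> + M + integral\<^sup>L \<nu> \<psi>)) = - (integral\<^sup>L \<mu> \<phi> + M + integral\<^sup>L \<nu> \<psi>)"
      using t0 by (simp add: field_simps)
    ultimately have "- (integral\<^sup>L \<mu> \<phi> + M + integral\<^sup>L \<nu> \<psi>) \<le> t * V" by simp
    then show ?thesis using e by simp
  qed
qed

lemma Qset_bdd: assumes "F \<in> Cb" shows "bdd_below (Qset F)"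
proof -
  obtain M where "\<And>z. \<bar>F z\<bar> \<le> M" using Cb_bound[OF assms] by metis
  then show ?thesis unfolding bdd_below_def using Qset_lb by blast
qed

lemma pp_le: "F \<in> Cb \<Longrightarrow> e \<in> Qset F \<Longrightarrow> pp F \<le> e"
  unfolding pp_def using Qset_bdd by (simp add: cInf_lower)

lemma pp_ge: "F \<in> Cb \<Longrightarrow> (\<And>e. e \<in> Qset F \<Longrightarrow> d \<le> e) \<Longrightarrow> d \<le> pp F"
  unfolding pp_def using Qset_ne by (simp add: cInf_greatest)

lemma pp_lb: "F \<in> Cb \<Longrightarrow> (\<And>z. \<bar>F z\<bar> \<le> M) \<Longrightarrow> - M \<le> pp F"
  using pp_ge Qset_lb by metis

lemma Qset_add: assumes "e1 \<in> Qset F1" "e2 \<in> Qset F2" shows "e1 + e2 \<in> Qset (\<lambda>z. F1 z + F2 z)"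
proof -
  obtain \<phi>1 \<psi>1 t1 f1 where e1: "e1 = integral\<^sup>L \<mu> \<phi>1 + integral\<^sup>L \<nu> \<psi>1 + t1 * V" and phi1: "\<phi>1 \<in> Cb" and psi1: "\<psi>1 \<in> Cb"
    and t1: "0 \<le> t1" and f1: "f1 \<in> Cb" and fc1: "\<And>z. ereal (f1 z) \<le> c z" and Fle1: "\<And>z. F1 z \<le> oplus \<phi>1 \<psi>1 z + t1 * f1 z"
    using QsetE[OF assms(1)] by metis
  obtain \<phi>2 \<psi>2 t2 f2 where e2: "e2 = integral\<^sup>L \<mu> \<phi>2 + integral\<^sup>L \<nu> \<psi>2 + t2 * V" and phi2: "\<phi>2 \<in> Cb" and psi2: "\<psi>2 \<in> Cb"
    and t2: "0 \<le> t2" and f2: "f2 \<in> Cb" and fc2: "\<And>z. ereal (f2 z) \<le> c z" and Fle2: "\<And>z. F2 z \<le> oplus \<phi>2 \<psi>2 z + t2 * f2 z"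
    using QsetE[OF assms(2)] by metis
  define f where "f = (if t1 + t2 = 0 then f1 else (\<lambda>z. (1 / (t1 + t2)) * (t1 * f1 z + t2 * f2 z)))"
  have "(\<lambda>z. (1 / (t1 + t2)) * (t1 * f1 z + t2 * f2 z)) \<in> Cb" using f1 f2 by (intro Cb_scale Cb_add)
  then have f: "f \<in> Cb" unfolding f_def using f1 by simp
  have fc: "ereal (f z) \<le> c z" for z
  proof (cases "t1 + t2 = 0")
    case True then show ?thesis using fc1 by (simp add: f_def)
  next
    case False
    then have "t1 + t2 > 0" using t1 t2 by simp
    then show ?thesis using ereal_convex_le[OF fc1 fc2 t1 t2] False by (simp add: f_def)
  qed
  have tf: "(t1 + t2) * f z = t1 * f1 z + t2 * f2 z" for z
  proof (cases "t1 + t2 = 0")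
    case True then have "t1 = 0" "t2 = 0" using t1 t2 by auto
    then show ?thesis by simp
  next
    case False then show ?thesis by (simp add: f_def)
  qed
  have "integral\<^sup>L \<mu> (\<lambda>x. \<phi>1 x + \<phi>2 x) + integral\<^sup>L \<nu> (\<lambda>y. \<psi>1 y + \<psi>2 y) + (t1 + t2) * V \<in> Qset (\<lambda>z. F1 z + F2 z)"
  proof (rule QsetI)
    show "(\<lambda>x. \<phi>1 x + \<phi>2 x) \<in> Cb" using phi1 phi2 by (rule Cb_add)
    show "(\<lambda>x. \<psi>1 x + \<psi>2 x) \<in> Cb" using psi1 psi2 by (rule Cb_add)
    show "0 \<le> t1 + t2" using t1 t2 by simp
    show "f \<in> Cb" by (rule f)
    show "\<And>z. ereal (f z) \<le> c z" by (rule fc)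
    fix z show "F1 z + F2 z \<le> oplus (\<lambda>x. \<phi>1 x + \<phi>2 x) (\<lambda>x. \<psi>1 x + \<psi>2 x) z + (t1 + t2) * f z"
      using Fle1[of z] Fle2[of z] tf[of z] by (simp add: oplus_apply)
  qed
  moreover have "e1 + e2 = integral\<^sup>L \<mu> (\<lambda>x. \<phi>1 x + \<phi>2 x) + integral\<^sup>L \<nu> (\<lambda>y. \<psi>1 y + \<psi>2 y) + (t1 + t2) * V"
    using e1 e2 baire_int_add[OF mu phi1 phi2] baire_int_add[OF nu psi1 psi2] by (simp add: algebra_simps)
  ultimately show ?thesis by (simp only:)
qed

lemma Qset_scale: assumes a: "a > 0" and e: "e \<in> Qset F" shows "a * e \<in> Qset (\<lambda>z. a * F z)"
proof -
  obtain \<phi> \<psi> t f where e: "e = integral\<^sup>L \<mu> \<phi> + integral\<^sup>L \<nu> \<psi> + t * V" and phi: "\<phi> \<in> Cb" and psi: "\<psi> \<in> Cb"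
    and t: "0 \<le> t" and f: "f \<in> Cb" and fc: "\<And>z. ereal (f z) \<le> c z" and Fle: "\<And>z. F z \<le> oplus \<phi> \<psi> z + t * f z"
    using QsetE[OF e] by metis
  have "integral\<^sup>L \<mu> (\<lambda>x. a * \<phi> x) + integral\<^sup>L \<nu> (\<lambda>y. a * \<psi> y) + (a * t) * V \<in> Qset (\<lambda>z. a * F z)"
  proof (rule QsetI)
    show "(\<lambda>x. a * \<phi> x) \<in> Cb" using Cb_scale[OF phi] .
    show "(\<lambda>x. a * \<psi> x) \<in> Cb" using Cb_scale[OF psi] .
    show "0 \<le> a * t" using a t by simp
    show "f \<in> Cb" by (rule f)
    show "\<And>z. ereal (f z) \<le> c z" by (rule fc)
    fix z
    have "a * F z \<le> a * (oplus \<phi> \<psi> z + t * f z)" using Fle[of z] a by (simp add: mult_left_mono)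
    then show "a * F z \<le> oplus (\<lambda>x. a * \<phi> x) (\<lambda>x. a * \<psi> x) z + a * t * f z"
      by (simp add: oplus_apply algebra_simps)
  qed
  moreover have "a * e = integral\<^sup>L \<mu> (\<lambda>x. a * \<phi> x) + integral\<^sup>L \<nu> (\<lambda>y. a * \<psi> y) + (a * t) * V"
    using e by (simp add: algebra_simps)
  ultimately show ?thesis by (simp only:)
qed

lemma pp_sublin: "sublin Cb pp"
proof -
  have add: "pp (\<lambda>x. F1 x + F2 x) \<le> pp F1 + pp F2" if F: "F1 \<in> Cb" "F2 \<in> Cb" for F1 F2
  proof -
    have F12: "(\<lambda>x. F1 x + F2 x) \<in> Cb" using Cb_add[OF F] .
    have "pp (\<lambda>x. F1 x + F2 x) - pp F2 \<le> pp F1"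
    proof (rule pp_ge[OF F(1)])
      fix e1 assume e1: "e1 \<in> Qset F1"
      have "pp (\<lambda>x. F1 x + F2 x) - e1 \<le> pp F2"
      proof (rule pp_ge[OF F(2)])
        fix e2 assume e2: "e2 \<in> Qset F2"
        show "pp (\<lambda>x. F1 x + F2 x) - e1 \<le> e2" using pp_le[OF F12 Qset_add[OF e1 e2]] by simp
      qed
      then show "pp (\<lambda>x. F1 x + F2 x) - pp F2 \<le> e1" by simp
    qed
    then show ?thesis by simp
  qed
  have scle: "pp (\<lambda>x. a * F x) \<le> a * pp F" if F: "F \<in> Cb" and a: "a > 0" for F a
  proof -
    have aF: "(\<lambda>x. a * F x) \<in> Cb" using Cb_scale[OF F] .
    have "pp (\<lambda>x. a * F x) / a \<le> pp F"
    proof (rule pp_ge[OF F])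
      fix e assume "e \<in> Qset F"
      then have "pp (\<lambda>x. a * F x) \<le> a * e" using pp_le[OF aF Qset_scale[OF a]] by blast
      then show "pp (\<lambda>x. a * F x) / a \<le> e" using a by (simp add: divide_le_eq mult.commute)
    qed
    then show ?thesis using a by (simp add: divide_le_eq mult.commute)
  qed
  have hom: "pp (\<lambda>x. a * F x) = a * pp F" if F: "F \<in> Cb" and a: "a \<ge> 0" for F a
  proof (cases "a = 0")
    case True
    have "pp (\<lambda>x. 0) \<le> integral\<^sup>L \<mu> (\<lambda>x. 0) + integral\<^sup>L \<nu> (\<lambda>y. 0) + 0 * V"
      by (rule pp_le[OF Cb_const], rule QsetI[where f="\<lambda>z. b"], rule Cb_const, rule Cb_const, simp, rule Cb_const) (use cb in \<open>auto simp: oplus_apply\<close>)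
    moreover have "- 0 \<le> pp (\<lambda>x. 0)" by (rule pp_lb) auto
    ultimately show ?thesis using True by simp
  next
    case False
    then have a0: "a > 0" using a by simp
    have aF: "(\<lambda>x. a * F x) \<in> Cb" using Cb_scale[OF F] .
    have "pp (\<lambda>x. (1/a) * (a * F x)) \<le> (1/a) * pp (\<lambda>x. a * F x)" using scle[OF aF, of "1/a"] a0 by simp
    moreover have "(\<lambda>x. (1/a) * (a * F x)) = F" using a0 by simp
    ultimately have "pp F \<le> (1/a) * pp (\<lambda>x. a * F x)" by simp
    then have "a * pp F \<le> pp (\<lambda>x. a * F x)" using a0 by (simp add: field_simps)
    then show ?thesis using scle[OF F a0] by simp
  qed
  show ?thesis unfolding sublin_def using add hom by simp
qed

lemma hb_Cb: "hb_setting Cb pp"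
  by unfold_locales (auto simp: Cb_add Cb_scale pp_sublin)

theorem stage1: "\<exists>L. pos_lin L \<and> (\<forall>\<phi>\<in>Cb. \<forall>\<psi>\<in>Cb. L (oplus \<phi> \<psi>) = integral\<^sup>L \<mu> \<phi> + integral\<^sup>L \<nu> \<psi>)
    \<and> (\<forall>f\<in>Cb. (\<forall>z. ereal (f z) \<le> c z) \<longrightarrow> L f \<le> V)"
proof -
  obtain L where Ladd: "\<And>f g. f\<in>Cb \<Longrightarrow> g\<in>Cb \<Longrightarrow> L (\<lambda>x. f x + g x) = L f + L g"
    and Lsc: "\<And>f a. f\<in>Cb \<Longrightarrow> L (\<lambda>x. a * f x) = a * L f"
    and Lp: "\<And>f. f\<in>Cb \<Longrightarrow> L f \<le> pp f"
    using hb_setting.hahn_banach[OF hb_Cb] by blast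
  have upper: "L F \<le> integral\<^sup>L \<mu> \<phi> + integral\<^sup>L \<nu> \<psi>" if F: "F \<in> Cb" and phi: "\<phi> \<in> Cb" and psi: "\<psi> \<in> Cb"
    and le: "\<And>z. F z \<le> oplus \<phi> \<psi> z" for F \<phi> \<psi>
  proof -
    have "pp F \<le> integral\<^sup>L \<mu> \<phi> + integral\<^sup>L \<nu> \<psi> + 0 * V"
      by (rule pp_le[OF F], rule QsetI[where f="\<lambda>z. b"], rule phi, rule psi, simp, rule Cb_const) (use le cb in auto)
    then show ?thesis using Lp[OF F] by simp
  qed
  have neg: "L (\<lambda>x. - f x) = - L f" if "f \<in> Cb" for f using Lsc[OF that, of "-1"] by simp
  have Loplus: "L (oplus \<phi> \<psi>) = integral\<^sup>L \<mu> \<phi> + integral\<^sup>L \<nu> \<psi>" if phi: "\<phi> \<in> Cb" and psi: "\<psi> \<in> Cb" for \<phi> \<psi>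
  proof -
    have o: "oplus \<phi> \<psi> \<in> Cb" using oplus_Cb[OF phi psi] .
    have le: "L (oplus \<phi> \<psi>) \<le> integral\<^sup>L \<mu> \<phi> + integral\<^sup>L \<nu> \<psi>" using upper[OF o phi psi] by simp
    have "L (\<lambda>z. - oplus \<phi> \<psi> z) \<le> integral\<^sup>L \<mu> (\<lambda>x. - \<phi> x) + integral\<^sup>L \<nu> (\<lambda>y. - \<psi> y)"
      by (rule upper) (use Cb_minus[OF o] Cb_minus[OF phi] Cb_minus[OF psi] in \<open>auto simp: oplus_apply\<close>)
    then have "- L (oplus \<phi> \<psi>) \<le> - (integral\<^sup>L \<mu> \<phi> + integral\<^sup>L \<nu> \<psi>)" using neg[OF o] by simp
    then show ?thesis using le by simp
  qed
  have L1: "L (\<lambda>x. 1) = 1"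
  proof -
    have "oplus (\<lambda>x::'a. 1::real) (\<lambda>y::'b. 0::real) = (\<lambda>z. 1)" by (rule ext) (simp add: oplus_apply)
    moreover have "L (oplus (\<lambda>x::'a. 1::real) (\<lambda>y::'b. 0::real)) = integral\<^sup>L \<mu> (\<lambda>x. 1) + integral\<^sup>L \<nu> (\<lambda>y. 0)"
      using Loplus[OF Cb_const Cb_const] .
    ultimately show ?thesis unfolding baire_int_const[OF mu] baire_int_const[OF nu] by simp
  qed
  have Lpos: "0 \<le> L f" if f: "f \<in> Cb" and ge: "\<And>x. 0 \<le> f x" for f
  proof -
    have "L (\<lambda>x. - f x) \<le> integral\<^sup>L \<mu> (\<lambda>x. 0) + integral\<^sup>L \<nu> (\<lambda>y. 0)"
      by (rule upper) (use Cb_minus[OF f] ge in \<open>auto simp: oplus_apply\<close>)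
    then show ?thesis using neg[OF f] by simp
  qed
  have pl: "pos_lin L" by unfold_locales (use Ladd Lsc Lpos L1 in auto)
  have LV: "L f \<le> V" if f: "f \<in> Cb" and fc: "\<forall>z. ereal (f z) \<le> c z" for f
  proof -
    have "pp f \<le> integral\<^sup>L \<mu> (\<lambda>x. 0) + integral\<^sup>L \<nu> (\<lambda>y. 0) + 1 * V"
      by (rule pp_le[OF f], rule QsetI) (use f fc in \<open>auto simp: oplus_apply\<close>)
    then show ?thesis using Lp[OF f] by simp
  qed
  show ?thesis using pl Loplus LV by blast
qed

end

lemma weak_duality:
  assumes g: "\<gamma> \<in> Gamma \<mu> \<nu>" and adm: "DP_admissible c \<phi> \<psi>"
  shows "ereal (integral\<^sup>L \<mu> \<phi> + integral\<^sup>L \<nu> \<psi>) \<le> lsc_integral \<gamma> c"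
proof -
  have phi: "\<phi> \<in> Cb" and psi: "\<psi> \<in> Cb" and le: "\<forall>z. ereal (oplus \<phi> \<psi> z) \<le> c z"
    using adm unfolding DP_admissible_def by auto
  have o: "oplus \<phi> \<psi> \<in> Cb" using oplus_Cb[OF phi psi] .
  have eq: "fa_integral \<gamma> (oplus \<phi> \<psi>) = integral\<^sup>L \<mu> \<phi> + integral\<^sup>L \<nu> \<psi>"
    using g phi psi unfolding Gamma_def by blast
  have "ereal (fa_integral \<gamma> (oplus \<phi> \<psi>)) \<in> {ereal (fa_integral \<gamma> f) | f. f \<in> Cb \<and> (\<forall>x. ereal (f x) \<le> c x)}"
    using o le by blast
  then have "ereal (fa_integral \<gamma> (oplus \<phi> \<psi>)) \<le> lsc_integral \<gamma> c" unfolding lsc_integral_def by (rule Sup_upper)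
  then show ?thesis using eq by simp
qed

lemma adm_le_vmax: "DP_admissible c \<phi> \<psi> \<Longrightarrow> ereal (integral\<^sup>L \<mu> \<phi> + integral\<^sup>L \<nu> \<psi>) \<le> v_max \<mu> \<nu> c"
  unfolding v_max_def by (rule Sup_upper) blast

lemma hard_direction:
  fixes \<mu> :: "'a::topological_space measure" and \<nu> :: "'b::topological_space measure"
    and c :: "'a \<times> 'b \<Rightarrow> ereal"
  assumes mu: "baire_prob \<mu>" and nu: "baire_prob \<nu>" and c: "c \<in> lsc_bi"
    and sol: "DP_solution \<mu> \<nu> c \<phi>0 \<psi>0"
  shows "\<exists>\<gamma>\<in>Gamma \<mu> \<nu>. lsc_integral \<gamma> c = ereal (integral\<^sup>L \<mu> \<phi>0 + integral\<^sup>L \<nu> \<psi>0)"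
proof -
  define V where "V = integral\<^sup>L \<mu> \<phi>0 + integral\<^sup>L \<nu> \<psi>0"
  have adm0: "DP_admissible c \<phi>0 \<psi>0" and vV: "v_max \<mu> \<nu> c = ereal V"
    using sol unfolding DP_solution_def V_def by auto
  obtain b :: real where cb: "\<And>z. ereal b \<le> c z" using c unfolding lsc_bi_def by blast
  have Vb: "integral\<^sup>L \<mu> \<phi> + integral\<^sup>L \<nu> \<psi> \<le> V" if "DP_admissible c \<phi> \<psi>" for \<phi> \<psi>
    using adm_le_vmax[OF that, of \<mu> \<nu>] vV by simp
  interpret ot_setting \<mu> \<nu> c V b
    by unfold_locales (use mu nu cb Vb in auto)
  obtain L where pl: "pos_lin L" and Lo: "\<forall>\<phi>\<in>Cb. \<forall>\<psi>\<in>Cb. L (oplus \<phi> \<psi>) = integral\<^sup>L \<mu> \<phi> + integral\<^sup>L \<nu> \<psi>"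
    and LV: "\<forall>f\<in>Cb. (\<forall>z. ereal (f z) \<le> c z) \<longrightarrow> L f \<le> V"
    using stage1 by blast
  obtain \<gamma> where gM: "\<gamma> \<in> M1" and gL: "\<forall>F\<in>Cb. fa_integral \<gamma> F = L F"
    using pos_lin.representation[OF pl] by blast
  have "fa_integral \<gamma> (oplus \<phi> \<psi>) = integral\<^sup>L \<mu> \<phi> + integral\<^sup>L \<nu> \<psi>" if "\<phi> \<in> Cb" "\<psi> \<in> Cb" for \<phi> \<psi>
    using gL oplus_Cb[OF that] Lo that by simp
  then have gG: "\<gamma> \<in> Gamma \<mu> \<nu>" unfolding Gamma_def using gM by blast
  have "lsc_integral \<gamma> c \<le> ereal V" unfolding lsc_integral_def
  proof (rule Sup_least)
    fix y assume "y \<in> {ereal (fa_integral \<gamma> f) | f. f \<in> Cb \<and> (\<forall>x. ereal (f x) \<le> c x)}"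
    then obtain f where "y = ereal (fa_integral \<gamma> f)" "f \<in> Cb" "\<forall>x. ereal (f x) \<le> c x" by blast
    then show "y \<le> ereal V" using gL LV by simp
  qed
  moreover have "ereal V \<le> lsc_integral \<gamma> c" using weak_duality[OF gG adm0] V_def by simp
  ultimately show ?thesis using gG V_def by (intro bexI[where x=\<gamma>]) auto
qed

theorem mainTheorem7:
  fixes \<mu> :: "'a::topological_space measure" and \<nu> :: "'b::topological_space measure"
    and c :: "'a \<times> 'b \<Rightarrow> ereal"
  assumes "completely_regular_space (euclidean :: 'a topology)"
    and "Hausdorff_space (euclidean :: 'a topology)"
    and "completely_regular_space (euclidean :: 'b topology)"
    and "Hausdorff_space (euclidean :: 'b topology)"
    and "baire_prob \<mu>" and "baire_prob \<nu>"
    and "c \<in> lsc_bi"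
    and "v_min \<mu> \<nu> c < \<infinity>"
  shows "((\<exists>\<phi> \<psi>. DP_solution \<mu> \<nu> c \<phi> \<psi>)
          \<longleftrightarrow> (\<exists>\<phi> \<psi> \<gamma>. \<phi> \<in> Cb \<and> \<psi> \<in> Cb \<and> \<gamma> \<in> Gamma \<mu> \<nu>
                \<and> (\<forall>z. ereal (oplus \<phi> \<psi> z) \<le> c z)
                \<and> lsc_integral \<gamma> c = ereal (integral\<^sup>L \<mu> \<phi> + integral\<^sup>L \<nu> \<psi>)))
       \<and> ((\<exists>\<phi> \<psi> \<gamma>. \<phi> \<in> Cb \<and> \<psi> \<in> Cb \<and> \<gamma> \<in> Gamma \<mu> \<nu>
                \<and> (\<forall>z. ereal (oplus \<phi> \<psi> z) \<le> c z)
                \<and> lsc_integral \<gamma> c = ereal (integral\<^sup>L \<mu> \<phi> + integral\<^sup>L \<nu> \<psi>))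
          \<longleftrightarrow> ((\<exists>\<phi> \<psi>. DP_solution \<mu> \<nu> c \<phi> \<psi>) \<and> (\<exists>\<gamma>. OP_solution \<mu> \<nu> c \<gamma>)
                \<and> v_max \<mu> \<nu> c = v_min \<mu> \<nu> c))
       \<and> (\<forall>\<phi> \<psi> \<gamma>. \<phi> \<in> Cb \<and> \<psi> \<in> Cb \<and> \<gamma> \<in> Gamma \<mu> \<nu>
                \<and> (\<forall>z. ereal (oplus \<phi> \<psi> z) \<le> c z)
                \<and> lsc_integral \<gamma> c = ereal (integral\<^sup>L \<mu> \<phi> + integral\<^sup>L \<nu> \<psi>)
             \<longrightarrow> DP_solution \<mu> \<nu> c \<phi> \<psi> \<and> OP_solution \<mu> \<nu> c \<gamma>)"
proof -
  let ?H = "\<lambda>\<phi> \<psi> \<gamma>. \<phi> \<in> Cb \<and> \<psi> \<in> Cb \<and> \<gamma> \<in> Gamma \<mu> \<nu>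
                \<and> (\<forall>z. ereal (oplus \<phi> \<psi> z) \<le> c z)
                \<and> lsc_integral \<gamma> c = ereal (integral\<^sup>L \<mu> \<phi> + integral\<^sup>L \<nu> \<psi>)"
  have consequences: "DP_solution \<mu> \<nu> c \<phi> \<psi> \<and> OP_solution \<mu> \<nu> c \<gamma>
      \<and> v_max \<mu> \<nu> c = ereal (integral\<^sup>L \<mu> \<phi> + integral\<^sup>L \<nu> \<psi>)
      \<and> v_min \<mu> \<nu> c = ereal (integral\<^sup>L \<mu> \<phi> + integral\<^sup>L \<nu> \<psi>)"
    if H: "?H \<phi> \<psi> \<gamma>" for \<phi> \<psi> \<gamma>
  proof -
    have adm: "DP_admissible c \<phi> \<psi>" using H unfolding DP_admissible_def by blast
    have g: "\<gamma> \<in> Gamma \<mu> \<nu>" and eq: "lsc_integral \<gamma> c = ereal (integral\<^sup>L \<mu> \<phi> + integral\<^sup>L \<nu> \<psi>)"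
      using H by auto
    have "v_max \<mu> \<nu> c \<le> ereal (integral\<^sup>L \<mu> \<phi> + integral\<^sup>L \<nu> \<psi>)" unfolding v_max_def
    proof (rule Sup_least)
      fix y assume "y \<in> {ereal (integral\<^sup>L \<mu> \<phi> + integral\<^sup>L \<nu> \<psi>) |\<phi> \<psi>. DP_admissible c \<phi> \<psi>}"
      then obtain \<phi>' \<psi>' where "y = ereal (integral\<^sup>L \<mu> \<phi>' + integral\<^sup>L \<nu> \<psi>')" "DP_admissible c \<phi>' \<psi>'" by blast
      then show "y \<le> ereal (integral\<^sup>L \<mu> \<phi> + integral\<^sup>L \<nu> \<psi>)" using weak_duality[OF g] eq by metis
    qed
    then have vmax: "v_max \<mu> \<nu> c = ereal (integral\<^sup>L \<mu> \<phi> + integral\<^sup>L \<nu> \<psi>)"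
      using adm_le_vmax[OF adm] by (simp add: order_antisym)
    have "ereal (integral\<^sup>L \<mu> \<phi> + integral\<^sup>L \<nu> \<psi>) \<le> v_min \<mu> \<nu> c" unfolding v_min_def
    proof (rule INF_greatest)
      fix \<gamma>' assume "\<gamma>' \<in> Gamma \<mu> \<nu>"
      then show "ereal (integral\<^sup>L \<mu> \<phi> + integral\<^sup>L \<nu> \<psi>) \<le> lsc_integral \<gamma>' c" using weak_duality adm by blast
    qed
    moreover have "v_min \<mu> \<nu> c \<le> lsc_integral \<gamma> c" unfolding v_min_def using g by (rule INF_lower)
    ultimately have vmin: "v_min \<mu> \<nu> c = ereal (integral\<^sup>L \<mu> \<phi> + integral\<^sup>L \<nu> \<psi>)" using eq by simp
    show ?thesis using adm vmax vmin g eq unfolding DP_solution_def OP_solution_def by simp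
  qed
  have p1: "(\<exists>\<phi> \<psi>. DP_solution \<mu> \<nu> c \<phi> \<psi>) \<longleftrightarrow> (\<exists>\<phi> \<psi> \<gamma>. ?H \<phi> \<psi> \<gamma>)"
  proof
    assume "\<exists>\<phi> \<psi>. DP_solution \<mu> \<nu> c \<phi> \<psi>"
    then obtain \<phi> \<psi> where sol: "DP_solution \<mu> \<nu> c \<phi> \<psi>" by blast
    obtain \<gamma> where "\<gamma> \<in> Gamma \<mu> \<nu>" "lsc_integral \<gamma> c = ereal (integral\<^sup>L \<mu> \<phi> + integral\<^sup>L \<nu> \<psi>)"
      using hard_direction[OF assms(5,6,7) sol] by blast
    moreover have "DP_admissible c \<phi> \<psi>" using sol unfolding DP_solution_def by blast
    ultimately show "\<exists>\<phi> \<psi> \<gamma>. ?H \<phi> \<psi> \<gamma>" unfolding DP_admissible_def by blast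
  next
    assume "\<exists>\<phi> \<psi> \<gamma>. ?H \<phi> \<psi> \<gamma>"
    then show "\<exists>\<phi> \<psi>. DP_solution \<mu> \<nu> c \<phi> \<psi>" using consequences by blast
  qed
  have p2: "(\<exists>\<phi> \<psi> \<gamma>. ?H \<phi> \<psi> \<gamma>) \<longleftrightarrow> ((\<exists>\<phi> \<psi>. DP_solution \<mu> \<nu> c \<phi> \<psi>) \<and> (\<exists>\<gamma>. OP_solution \<mu> \<nu> c \<gamma>)
                \<and> v_max \<mu> \<nu> c = v_min \<mu> \<nu> c)"
  proof
    assume "\<exists>\<phi> \<psi> \<gamma>. ?H \<phi> \<psi> \<gamma>"
    then obtain \<phi> \<psi> \<gamma> where "?H \<phi> \<psi> \<gamma>" by blast
    from consequences[OF this] show "(\<exists>\<phi> \<psi>. DP_solution \<mu> \<nu> c \<phi> \<psi>) \<and> (\<exists>\<gamma>. OP_solution \<mu> \<nu> c \<gamma>)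
                \<and> v_max \<mu> \<nu> c = v_min \<mu> \<nu> c" by auto
  next
    assume A: "(\<exists>\<phi> \<psi>. DP_solution \<mu> \<nu> c \<phi> \<psi>) \<and> (\<exists>\<gamma>. OP_solution \<mu> \<nu> c \<gamma>) \<and> v_max \<mu> \<nu> c = v_min \<mu> \<nu> c"
    then obtain \<phi> \<psi> \<gamma> where s1: "DP_solution \<mu> \<nu> c \<phi> \<psi>" and s2: "OP_solution \<mu> \<nu> c \<gamma>"
      and v: "v_max \<mu> \<nu> c = v_min \<mu> \<nu> c" by blast
    have "lsc_integral \<gamma> c = ereal (integral\<^sup>L \<mu> \<phi> + integral\<^sup>L \<nu> \<psi>)"
      using s1 s2 v unfolding DP_solution_def OP_solution_def by simp
    then have "?H \<phi> \<psi> \<gamma>" using s1 s2 unfolding DP_solution_def OP_solution_def DP_admissible_def by blast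
    then show "\<exists>\<phi> \<psi> \<gamma>. ?H \<phi> \<psi> \<gamma>" by blast
  qed
  have p3: "\<forall>\<phi> \<psi> \<gamma>. ?H \<phi> \<psi> \<gamma> \<longrightarrow> DP_solution \<mu> \<nu> c \<phi> \<psi> \<and> OP_solution \<mu> \<nu> c \<gamma>"
    using consequences by blast
  show ?thesis using p1 p2 p3 by blast
qed

end
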